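(* Assume $n$ is odd. For $i\in I_0$ and a positive integer $q$, the linear map $\Theta_i^{(q)}:H_{\bar0}\to W_{\bar1}$, $D_H(f)\mapsto x^\omega\,(\mathrm{ad}\,\partial_i)^{p^q}(D_H(f))$, where $\mathrm{ad}\,\partial_i(E)=[\partial_i,E]$, is a derivation from $H_{\bar0}$ into $W_{\bar1}$ (i.e. $\Theta_i^{(q)}([x,y])=[\Theta_i^{(q)}(x),y]+[x,\Theta_i^{(q)}(y)]$ for $x,y\in H_{\bar0}$), and it is $\mathbb Z$-homogeneous of degree $n-p^q$.
   Context: Let $\mathbb F$ be an algebraically closed field of characteristic $p>3$. Fix positive integers $m=2r$ and $n$; write $n=2s$ if $n$ is even and $n=2s+1$ if $n$ is odd. Put $I_0=\{1,\dots,m\}$, $I_1=\{m+1,\dots,m+n\}$, $I=I_0\cup I_1$. Fix positive integers $t_1,\dots,t_m$, put $\pi=(\pi_1,\dots,\pi_m)$ with $\pi_i=p^{t_i}-1$, and $\mathbb A=\{\alpha\in\mathbb N_0^m:\alpha_i\le\pi_i\ \forall i\}$; $\varepsilon_i$ is the $i$-th unit vector and $|\alpha|=\sum\alpha_i$. Let $\mathbb B$ be the set of strictly increasing sequences $u=\langle i_1<\dots<i_k\rangle$ of elements of $I_1$ (including $\emptyset$), $|u|=k$, $\mathbb B^0=\{u\in\mathbb B:|u|\text{ even}\}$, $\omega=\langle m+1,\dots,m+n\rangle$. Let $\mathcal O=\mathcal O(m,n;\underline t)$ be the supercommutative associative superalgebra with basis $x^{(\alpha)}x^u$ ($\alpha\in\mathbb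 A,u\in\mathbb B$), where $x^{(\alpha)}x^{(\beta)}=\binom{\alpha+\beta}{\alpha}x^{(\alpha+\beta)}$, $x^{(\alpha)}$ even, $x_{m+1},\dots,x_{m+n}$ odd and pairwise anticommuting, $x^u=x_{i_1}\cdots x_{i_k}$, $x^\emptyset=1$, $x_i:=x^{(\varepsilon_i)}$ for $i\in I_0$, $\mathbb Z$-graded by $\mathrm{zd}(x^{(\alpha)}x^u)=|\alpha|+|u|$. For $i\in I$ let $\partial_i$ be the superderivation of $\mathcal O$ with $\partial_i(x^{(\alpha)})=x^{(\alpha-\varepsilon_i)}$ for $i\in I_0$ and $\partial_i(x_k)=\delta_{ik}$ for $i\in I_1$; parity $\mu(i)=\bar0$ for $i\in I_0$, $\mu(i)=\bar1$ for $i\in I_1$. $W=\{\sum_{i\in I}f_i\partial_i: f_i\in\mathcal O\}$ is the Lie superalgebra with bracket $[f\partial_i,g\partial_j]=f\partial_i(g)\partial_j-(-1)^{p(f\partial_i)p(g\partial_j)}g\partial_j(f)\partial_i$, $\mathbb Z$-graded by $\mathrm{zd}(f\partial_j)=\mathrm{zd}(f)-1$, with even and odd parts $W_{\bar 0},W_{\bar1}$; for $h\in\mathcal O$ and $E=\sum f_j\partial_j\in W$, $hE=\sum hf_j\partial_j$. Define $i'=i+r$ ($1\le i\le r$), $i'=i-r$ ($r<i\le m$), $i'=i+s$ ($m<i\le m+s$), $i'=i-s$ ($m+s<i\le m+2s$), $i'=i$ otherwise; $\tau(i)=1$ for $1\le i\le r$, $\tau(i)=-1$ for $r<i\le m$,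 $\tau(i)=1$ for $i\in I_1$. For $f\in\mathcal O$ put $D_H(f)=\sum_{i\in I}\tau(i)(-1)^{\mu(i)p(f)}\partial_i(f)\partial_{i'}$. Let $H_{\bar0}=\mathrm{span}_{\mathbb F}\{D_H(x^{(\alpha)}x^u):\alpha\in\mathbb A,u\in\mathbb B^0,(\alpha,u)\ne(\pi,\omega)\}$, a $\mathbb Z$-graded subalgebra of $W_{\bar0}$ with $\mathrm{zd}(D_H(f))=\mathrm{zd}(f)-2$. A linear map between $\mathbb Z$-graded spaces is $\mathbb Z$-homogeneous of degree $d$ if it maps degree $k$ into degree $k+d$ for all $k$. *)

theory Defs
  imports "HOL-Computational_Algebra.Polynomial"
begin

(* Basis index of O(m,n;t): a pair (alpha, u) with alpha a multi-index supported on {1..m}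
   and u a subset of I_1 = {m+1..m+n} (an increasing sequence is identified with its set). *)
type_synonym idx = "(nat \<Rightarrow> nat) \<times> nat set"
(* An element of O = coefficient function on basis indices (zero off the basis). *)
type_synonym 'a sO = "idx \<Rightarrow> 'a"
(* An element of W = family of coefficients f_j of \<partial>_j (zero for j outside I). *)
type_synonym 'a sW = "nat \<Rightarrow> 'a sO"

definition Aset :: "nat \<Rightarrow> (nat \<Rightarrow> nat) \<Rightarrow> nat \<Rightarrow> (nat \<Rightarrow> nat) set" where
  "Aset m t p = {\<alpha>. (\<forall>k. k \<notin> {1..m} \<longrightarrow> \<alpha> k = 0) \<and> (\<forall>k\<in>{1..m}. \<alpha> k \<le> p ^ t k - 1)}"

definition Bas :: "nat \<Rightarrow> nat \<Rightarrow> (nat \<Rightarrow> nat) \<Rightarrow> nat \<Rightarrow> idx set" where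
  "Bas m n t p = Aset m t p \<times> Pow {m+1..m+n}"

definition piv :: "nat \<Rightarrow> (nat \<Rightarrow> nat) \<Rightarrow> nat \<Rightarrow> nat \<Rightarrow> nat" where
  "piv m t p = (\<lambda>k. if k \<in> {1..m} then p ^ t k - 1 else 0)"

definition omega :: "nat \<Rightarrow> nat \<Rightarrow> nat set" where
  "omega m n = {m+1..m+n}"

(* x^u x^v = sign_uv u v * x^(u \<union> v) for disjoint u, v *)
definition sign_uv :: "nat set \<Rightarrow> nat set \<Rightarrow> 'a::field" where
  "sign_uv u v = (if even (card {(a,b). a \<in> u \<and> b \<in> v \<and> b < a}) then 1 else -1)"

definition omul :: "nat \<Rightarrow> nat \<Rightarrow> (nat \<Rightarrow> nat) \<Rightarrow> nat \<Rightarrow> 'a::field sO \<Rightarrow> 'a sO \<Rightarrow> 'a sO" where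
  "omul m n t p f g = (\<lambda>(\<gamma>, w). if (\<gamma>, w) \<in> Bas m n t p then
      (\<Sum>(\<alpha>, u)\<in>Bas m n t p. \<Sum>(\<beta>, v)\<in>Bas m n t p.
         if (\<lambda>k. \<alpha> k + \<beta> k) = \<gamma> \<and> u \<inter> v = {} \<and> u \<union> v = w
         then (\<Prod>k\<in>{1..m}. of_nat ((\<alpha> k + \<beta> k) choose \<alpha> k)) * sign_uv u v * f (\<alpha>, u) * g (\<beta>, v)
         else 0)
     else 0)"

definition oderiv :: "nat \<Rightarrow> nat \<Rightarrow> (nat \<Rightarrow> nat) \<Rightarrow> nat \<Rightarrow> nat \<Rightarrow> 'a::field sO \<Rightarrow> 'a sO" where
  "oderiv m n t p i f = (\<lambda>(\<beta>, v).
     if (\<beta>, v) \<notin> Bas m n t p then 0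
     else if i \<in> {1..m} then
       (if \<beta>(i := \<beta> i + 1) \<in> Aset m t p then f (\<beta>(i := \<beta> i + 1), v) else 0)
     else if i \<in> {m+1..m+n} then
       (if i \<notin> v then (-1) ^ card {k \<in> v. k < i} * f (\<beta>, insert i v) else 0)
     else 0)"

(* parity-b part of an element of O (b = True: odd) *)
definition opart :: "'a::field sO \<Rightarrow> bool \<Rightarrow> 'a sO" where
  "opart f b = (\<lambda>(\<alpha>, u). if odd (card u) = b then f (\<alpha>, u) else 0)"

(* parity-b part of an element of W; parity of f \<partial>_j is p(f) + \<mu>(j), \<mu>(j) odd iff j > m *)
definition Wpart :: "nat \<Rightarrow> 'a::field sW \<Rightarrow> bool \<Rightarrow> 'a sW" where
  "Wpart m D b = (\<lambda>j. opart (D j) (b \<noteq> (m < j)))"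

definition Wapp :: "nat \<Rightarrow> nat \<Rightarrow> (nat \<Rightarrow> nat) \<Rightarrow> nat \<Rightarrow> 'a::field sW \<Rightarrow> 'a sO \<Rightarrow> 'a sO" where
  "Wapp m n t p D h = (\<lambda>x. \<Sum>j\<in>{1..m+n}. omul m n t p (D j) (oderiv m n t p j h) x)"

definition brh :: "nat \<Rightarrow> nat \<Rightarrow> (nat \<Rightarrow> nat) \<Rightarrow> nat \<Rightarrow> bool \<Rightarrow> bool \<Rightarrow> 'a::field sW \<Rightarrow> 'a sW \<Rightarrow> 'a sW" where
  "brh m n t p a b D E = (\<lambda>j x. Wapp m n t p D (E j) x
        - (if a \<and> b then -1 else 1) * Wapp m n t p E (D j) x)"

(* the Lie superbracket of W, extended bilinearly *)
definition Wbr :: "nat \<Rightarrow> nat \<Rightarrow> (nat \<Rightarrow> nat) \<Rightarrow> nat \<Rightarrow> 'a::field sW \<Rightarrow> 'a sW \<Rightarrow> 'a sW" where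
  "Wbr m n t p D E = (\<lambda>j x. \<Sum>a\<in>UNIV. \<Sum>b\<in>UNIV.
        brh m n t p a b (Wpart m D a) (Wpart m E b) j x)"

definition Wadd :: "'a::field sW \<Rightarrow> 'a sW \<Rightarrow> 'a sW" where
  "Wadd D E = (\<lambda>j x. D j x + E j x)"

definition prm :: "nat \<Rightarrow> nat \<Rightarrow> nat \<Rightarrow> nat" where
  "prm m n i = (let r = m div 2; s = n div 2 in
     if 1 \<le> i \<and> i \<le> r then i + r
     else if r < i \<and> i \<le> m then i - r
     else if m < i \<and> i \<le> m + s then i + s
     else if m + s < i \<and> i \<le> m + 2 * s then i - s
     else i)"

definition tau :: "nat \<Rightarrow> nat \<Rightarrow> 'a::field" where
  "tau m i = (if m div 2 < i \<and> i \<le> m then -1 else 1)"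

(* D_H, extended linearly over the parity decomposition of f;
   coefficient of \<partial>_j comes from the index i with i' = j, i.e. i = j' *)
definition DH :: "nat \<Rightarrow> nat \<Rightarrow> (nat \<Rightarrow> nat) \<Rightarrow> nat \<Rightarrow> 'a::field sO \<Rightarrow> 'a sW" where
  "DH m n t p f = (\<lambda>j x. if j \<in> {1..m+n} then
      (let i = prm m n j in \<Sum>b\<in>UNIV.
         tau m i * (if b \<and> m < i then -1 else 1) * oderiv m n t p i (opart f b) x)
     else 0)"

definition bas :: "idx \<Rightarrow> 'a::field sO" where
  "bas y0 = (\<lambda>y. if y = y0 then 1 else 0)"

definition HB :: "nat \<Rightarrow> nat \<Rightarrow> (nat \<Rightarrow> nat) \<Rightarrow> nat \<Rightarrow> idx set" where
  "HB m n t p = {(\<alpha>, u) \<in> Bas m n t p. even (card u) \<and> (\<alpha>, u) \<noteq> (piv m t p, omega m n)}"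

definition H0 :: "nat \<Rightarrow> nat \<Rightarrow> (nat \<Rightarrow> nat) \<Rightarrow> nat \<Rightarrow> 'a::field sW set" where
  "H0 m n t p = {D. \<exists>c :: idx \<Rightarrow> 'a.
      D = (\<lambda>j x. \<Sum>y\<in>HB m n t p. c y * DH m n t p (bas y) j x)}"

definition Wset :: "nat \<Rightarrow> nat \<Rightarrow> (nat \<Rightarrow> nat) \<Rightarrow> nat \<Rightarrow> 'a::field sW set" where
  "Wset m n t p = {D. (\<forall>j. j \<notin> {1..m+n} \<longrightarrow> D j = (\<lambda>_. 0))
                    \<and> (\<forall>j x. x \<notin> Bas m n t p \<longrightarrow> D j x = 0)}"

definition W1 :: "nat \<Rightarrow> nat \<Rightarrow> (nat \<Rightarrow> nat) \<Rightarrow> nat \<Rightarrow> 'a::field sW set" where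
  "W1 m n t p = {D \<in> Wset m n t p. Wpart m D True = D}"

definition zdeg :: "nat \<Rightarrow> idx \<Rightarrow> nat" where
  "zdeg m y = (\<Sum>k\<in>{1..m}. fst y k) + card (snd y)"

(* D lies in the degree-k component W_k (zd(f \<partial>_j) = zd(f) - 1) *)
definition Whom :: "nat \<Rightarrow> int \<Rightarrow> 'a::field sW \<Rightarrow> bool" where
  "Whom m k D = (\<forall>j x. D j x \<noteq> 0 \<longrightarrow> int (zdeg m x) - 1 = k)"

definition dW :: "nat \<Rightarrow> 'a::field sW" where
  "dW i = (\<lambda>j. if j = i then bas (\<lambda>_. 0, {}) else (\<lambda>_. 0))"

definition Theta :: "nat \<Rightarrow> nat \<Rightarrow> (nat \<Rightarrow> nat) \<Rightarrow> nat \<Rightarrow> nat \<Rightarrow> nat \<Rightarrow> 'a::field sW \<Rightarrow> 'a sW" where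
  "Theta m n t p i q D = (\<lambda>j. omul m n t p (bas (\<lambda>_. 0, omega m n))
       ((((\<lambda>E. Wbr m n t p (dW i) E) ^^ (p ^ q)) D) j))"

end

theory Submission
  imports Defs
begin

lemma choose_pp_dvd:
  fixes p :: nat
  assumes "prime p" "0 < k" "k < p ^ e"
  shows "p dvd (p ^ e choose k)"
proof (rule ccontr)
  assume nd: "\<not> p dvd (p ^ e choose k)"
  have "k * (p ^ e choose k) = p ^ e * ((p ^ e - 1) choose (k - 1))"
    using times_binomial_minus1_eq[OF assms(2)] by simp
  hence "p ^ e dvd k * (p ^ e choose k)" by simp
  moreover have "coprime (p ^ e) (p ^ e choose k)"
    using nd assms(1) by (simp add: prime_imp_coprime coprime_commute)
  ultimately have "p ^ e dvd k" using coprime_dvd_mult_left_iff by blast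
  thus False using dvd_imp_le[of "p^e" k] assms(2,3) by linarith
qed

lemma choose_V:
  assumes ch: "CHAR('a::field) = p" and pr: "prime p"
  shows "(of_nat ((c + p ^ e) choose a) :: 'a) = of_nat (c choose a) + (if p ^ e \<le> a then of_nat (c choose (a - p ^ e)) else 0)"
proof -
  let ?N = "p ^ e"
  let ?f = "\<lambda>k. (of_nat ((?N choose k) * (c choose (a - k))) :: 'a)"
  have "(of_nat ((c + ?N) choose a) :: 'a) = of_nat (\<Sum>k\<le>a. (?N choose k) * (c choose (a - k)))"
    by (simp add: vandermonde add.commute)
  also have "\<dots> = (\<Sum>k\<le>a. ?f k)" by simp
  also have "\<dots> = (\<Sum>k\<in>({0} \<union> (if ?N \<le> a then {?N} else {})). ?f k)"
  proof (rule sum.mono_neutral_right)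
    show "finite {..a}" by simp
    show "{0} \<union> (if ?N \<le> a then {?N} else {}) \<subseteq> {..a}" by auto
    show "\<forall>k\<in>{..a} - ({0} \<union> (if ?N \<le> a then {?N} else {})). ?f k = 0"
    proof
      fix k assume k: "k \<in> {..a} - ({0} \<union> (if ?N \<le> a then {?N} else {}))"
      show "?f k = 0"
      proof (cases "k < ?N")
        case True
        with k have "p dvd (?N choose k)" using choose_pp_dvd[OF pr] by auto
        hence "CHAR('a) dvd (?N choose k) * (c choose (a - k))" using ch by simp
        thus ?thesis by (simp only: of_nat_eq_0_iff_char_dvd)
      next
        case False
        with k have "k > ?N" by (auto split: if_splits)
        thus ?thesis by (simp add: binomial_eq_0)
      qed
    qed
  qed
  also have "\<dots> = of_nat (c choose a) + (if ?N \<le> a then of_nat (c choose (a - ?N)) else 0)"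
  proof -
    have N0: "?N \<noteq> 0" using pr by (simp add: prime_gt_0_nat)
    show ?thesis using N0 by (cases "?N \<le> a") (auto simp: sum.insert)
  qed
  finally show ?thesis .
qed

lemma choose_kummer:
  assumes ch: "CHAR('a::field) = p" and pr: "prime p"
    and "a < p ^ e" "b < p ^ e" "p ^ e \<le> a + b"
  shows "(of_nat ((a + b) choose a) :: 'a) = 0"
proof -
  have "a + b = (a + b - p ^ e) + p ^ e" using assms by simp
  hence "(of_nat ((a + b) choose a) :: 'a) = of_nat ((a + b - p ^ e) choose a) + (if p ^ e \<le> a then of_nat ((a + b - p ^ e) choose (a - p ^ e)) else 0)"
    using choose_V[OF ch pr, of "a + b - p ^ e" e a] by simp
  also have "\<dots> = 0" using assms by (simp add: binomial_eq_0)
  finally show ?thesis .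
qed

definition dpm :: "nat \<Rightarrow> (nat \<Rightarrow> nat) \<Rightarrow> nat \<Rightarrow> ((nat \<Rightarrow> nat) \<Rightarrow> 'a::field) \<Rightarrow> ((nat \<Rightarrow> nat) \<Rightarrow> 'a) \<Rightarrow> (nat \<Rightarrow> nat) \<Rightarrow> 'a" where
  "dpm m t p F G \<gamma> = (if \<gamma> \<in> Aset m t p then
      (\<Sum>\<alpha>\<in>Aset m t p. \<Sum>\<beta>\<in>Aset m t p.
         if (\<lambda>k. \<alpha> k + \<beta> k) = \<gamma>
         then (\<Prod>k\<in>{1..m}. of_nat ((\<alpha> k + \<beta> k) choose \<alpha> k)) * F \<alpha> * G \<beta>
         else 0) else 0)"

lemma finite_Aset: "finite (Aset m t p)"
proof -
  let ?B = "\<Union>k\<in>{1..m}. {0..p ^ t k - 1}"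
  have "Aset m t p \<subseteq> {f. \<forall>x. (x \<in> {1..m} \<longrightarrow> f x \<in> ?B) \<and> (x \<notin> {1..m} \<longrightarrow> f x = 0)}"
  proof
    fix f assume f: "f \<in> Aset m t p"
    show "f \<in> {f. \<forall>x. (x \<in> {1..m} \<longrightarrow> f x \<in> ?B) \<and> (x \<notin> {1..m} \<longrightarrow> f x = 0)}"
    proof (clarify, intro conjI impI)
      fix x assume "x \<in> {1..m}" thus "f x \<in> ?B" using f unfolding Aset_def by (intro UN_I[of x]) auto
    next
      fix x assume "x \<notin> {1..m}" thus "f x = 0" using f unfolding Aset_def by auto
    qed
  qed
  moreover have "finite {f. \<forall>x. (x \<in> {1..m} \<longrightarrow> f x \<in> ?B) \<and> (x \<notin> {1..m} \<longrightarrow> f x = (0::nat))}"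
    by (rule finite_set_of_finite_funs) auto
  ultimately show ?thesis by (rule finite_subset)
qed

lemma omul_layers:
  "omul m n t p f g (\<gamma>, w) = (if (\<gamma>, w) \<in> Bas m n t p then
     (\<Sum>u\<in>Pow {m+1..m+n}. \<Sum>v\<in>Pow {m+1..m+n}.
        if u \<inter> v = {} \<and> u \<union> v = w then sign_uv u v * dpm m t p (\<lambda>\<alpha>. f (\<alpha>, u)) (\<lambda>\<beta>. g (\<beta>, v)) \<gamma> else 0)
     else 0)"
proof (cases "(\<gamma>, w) \<in> Bas m n t p")
  case False thus ?thesis by (simp add: omul_def)
next
  case True
  let ?A = "Aset m t p" and ?P = "Pow {m+1..m+n}"
  have gA: "\<gamma> \<in> ?A" using True by (simp add: Bas_def)
  have fA: "finite ?A" by (rule finite_Aset)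
  have fP: "finite ?P" by simp
  define T where "T = (\<lambda>\<alpha> u \<beta> v. if (\<lambda>k. \<alpha> k + \<beta> k) = \<gamma> \<and> u \<inter> v = {} \<and> u \<union> v = w
         then (\<Prod>k\<in>{1..m}. of_nat ((\<alpha> k + \<beta> k) choose \<alpha> k)) * sign_uv u v * f (\<alpha>, u) * g (\<beta>, v)
         else (0::'a))"
  have "omul m n t p f g (\<gamma>, w) = (\<Sum>\<alpha>\<in>?A. \<Sum>u\<in>?P. \<Sum>\<beta>\<in>?A. \<Sum>v\<in>?P. T \<alpha> u \<beta> v)"
    using True by (simp add: omul_def Bas_def T_def sum.cartesian_product[symmetric])
  also have "\<dots> = (\<Sum>\<alpha>\<in>?A. \<Sum>u\<in>?P. \<Sum>v\<in>?P. \<Sum>\<beta>\<in>?A. T \<alpha> u \<beta> v)"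
    by (rule sum.cong[OF refl], rule sum.cong[OF refl], rule sum.swap)
  also have "\<dots> = (\<Sum>u\<in>?P. \<Sum>\<alpha>\<in>?A. \<Sum>v\<in>?P. \<Sum>\<beta>\<in>?A. T \<alpha> u \<beta> v)"
    by (rule sum.swap)
  also have "\<dots> = (\<Sum>u\<in>?P. \<Sum>v\<in>?P. \<Sum>\<alpha>\<in>?A. \<Sum>\<beta>\<in>?A. T \<alpha> u \<beta> v)"
    by (rule sum.cong[OF refl], rule sum.swap)
  also have "\<dots> = (\<Sum>u\<in>?P. \<Sum>v\<in>?P.
        if u \<inter> v = {} \<and> u \<union> v = w then sign_uv u v * dpm m t p (\<lambda>\<alpha>. f (\<alpha>, u)) (\<lambda>\<beta>. g (\<beta>, v)) \<gamma> else 0)"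
  proof (rule sum.cong[OF refl], rule sum.cong[OF refl])
    fix u v
    show "(\<Sum>\<alpha>\<in>?A. \<Sum>\<beta>\<in>?A. T \<alpha> u \<beta> v) = (if u \<inter> v = {} \<and> u \<union> v = w then sign_uv u v * dpm m t p (\<lambda>\<alpha>. f (\<alpha>, u)) (\<lambda>\<beta>. g (\<beta>, v)) \<gamma> else 0)"
    proof (cases "u \<inter> v = {} \<and> u \<union> v = w")
      case True thus ?thesis using gA by (simp add: T_def dpm_def sum_distrib_left mult_ac if_distrib cong: if_cong)
    next
      case False
      hence "\<And>\<alpha> \<beta>. T \<alpha> u \<beta> v = 0" by (auto simp: T_def)
      thus ?thesis using False by auto
    qed
  qed
  finally show ?thesis using True by simp
qed

definition Le :: "(nat \<Rightarrow> nat) \<Rightarrow> (nat \<Rightarrow> nat) set" where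
  "Le \<gamma> = {\<alpha>. \<forall>k. \<alpha> k \<le> \<gamma> k}"

definition shf :: "nat \<Rightarrow> (nat \<Rightarrow> nat) \<Rightarrow> nat \<Rightarrow> nat \<Rightarrow> nat \<Rightarrow> ((nat \<Rightarrow> nat) \<Rightarrow> 'a::zero) \<Rightarrow> (nat \<Rightarrow> nat) \<Rightarrow> 'a" where
  "shf m t p i N F \<beta> = (if \<beta> \<in> Aset m t p \<and> \<beta>(i := \<beta> i + N) \<in> Aset m t p then F (\<beta>(i := \<beta> i + N)) else 0)"

lemma Aset_upd: "\<beta> \<in> Aset m t p \<Longrightarrow> i \<in> {1..m} \<Longrightarrow> (\<beta>(i := c) \<in> Aset m t p \<longleftrightarrow> c \<le> p ^ t i - 1)"
  unfolding Aset_def by auto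

lemma Aset_le: "\<gamma> \<in> Aset m t p \<Longrightarrow> \<forall>k. \<alpha> k \<le> \<gamma> k \<Longrightarrow> \<alpha> \<in> Aset m t p"
proof -
  assume g: "\<gamma> \<in> Aset m t p" and le: "\<forall>k. \<alpha> k \<le> \<gamma> k"
  have "\<alpha> k = 0" if "k \<notin> {1..m}" for k
  proof -
    have "\<gamma> k = 0" using g that unfolding Aset_def by blast
    thus ?thesis using le[rule_format, of k] by simp
  qed
  moreover have "\<alpha> k \<le> p ^ t k - 1" if "k \<in> {1..m}" for k
  proof -
    have "\<gamma> k \<le> p ^ t k - 1" using g that unfolding Aset_def by blast
    thus ?thesis using le[rule_format, of k] by simp
  qed
  ultimately show ?thesis unfolding Aset_def by blast
qed

lemma Aset_sub: "\<gamma> \<in> Aset m t p \<Longrightarrow> (\<lambda>k. \<gamma> k - \<alpha> k) \<in> Aset m t p"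
  using Aset_le[of \<gamma> m t p "\<lambda>k. \<gamma> k - \<alpha> k"] by simp

lemma Le_subset: "\<gamma> \<in> Aset m t p \<Longrightarrow> Le \<gamma> \<subseteq> Aset m t p"
  using Aset_le unfolding Le_def by blast

lemma finite_Le:
  assumes "\<forall>k. k \<notin> {1..m} \<longrightarrow> \<gamma> k = 0"
  shows "finite (Le \<gamma>)"
proof -
  let ?B = "\<Union>k\<in>{1..m}. {0..\<gamma> k}"
  have "Le \<gamma> \<subseteq> {f. \<forall>x. (x \<in> {1..m} \<longrightarrow> f x \<in> ?B) \<and> (x \<notin> {1..m} \<longrightarrow> f x = 0)}"
  proof
    fix f assume f: "f \<in> Le \<gamma>"
    show "f \<in> {f. \<forall>x. (x \<in> {1..m} \<longrightarrow> f x \<in> ?B) \<and> (x \<notin> {1..m} \<longrightarrow> f x = 0)}"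
    proof (clarify, intro conjI impI)
      fix x assume "x \<in> {1..m}" thus "f x \<in> ?B" using f unfolding Le_def by (intro UN_I[of x]) auto
    next
      fix x assume x: "x \<notin> {1..m}"
      have "f x \<le> \<gamma> x" using f by (simp add: Le_def)
      moreover have "\<gamma> x = 0" using assms x by blast
      ultimately show "f x = 0" by simp
    qed
  qed
  moreover have "finite {f. \<forall>x. (x \<in> {1..m} \<longrightarrow> f x \<in> ?B) \<and> (x \<notin> {1..m} \<longrightarrow> f x = (0::nat))}"
    by (rule finite_set_of_finite_funs) auto
  ultimately show ?thesis by (rule finite_subset)
qed

lemma finite_Le_A: "\<gamma> \<in> Aset m t p \<Longrightarrow> finite (Le \<gamma>)"
  by (rule finite_subset[OF Le_subset finite_Aset])

lemma dpm_Le: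
  assumes gA: "\<gamma> \<in> Aset m t p"
  shows "dpm m t p F G \<gamma> = (\<Sum>\<alpha>\<in>Le \<gamma>. (\<Prod>k\<in>{1..m}. of_nat (\<gamma> k choose \<alpha> k)) * F \<alpha> * G (\<lambda>k. \<gamma> k - \<alpha> k))"
proof -
  let ?A = "Aset m t p"
  let ?H = "\<lambda>\<alpha>. (\<Prod>k\<in>{1..m}. of_nat (\<gamma> k choose \<alpha> k)) * F \<alpha> * G (\<lambda>k. \<gamma> k - \<alpha> k)"
  have inner: "(\<Sum>\<beta>\<in>?A. if (\<lambda>k. \<alpha> k + \<beta> k) = \<gamma>
         then (\<Prod>k\<in>{1..m}. of_nat ((\<alpha> k + \<beta> k) choose \<alpha> k)) * F \<alpha> * G \<beta> else 0)
      = (if \<alpha> \<in> Le \<gamma> then ?H \<alpha> else 0)" for \<alpha>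
  proof (cases "\<alpha> \<in> Le \<gamma>")
    case True
    hence le: "\<forall>k. \<alpha> k \<le> \<gamma> k" by (simp add: Le_def)
    have eq: "((\<lambda>k. \<alpha> k + \<beta> k) = \<gamma>) = (\<beta> = (\<lambda>k. \<gamma> k - \<alpha> k))" for \<beta>
    proof
      assume h: "(\<lambda>k. \<alpha> k + \<beta> k) = \<gamma>"
      show "\<beta> = (\<lambda>k. \<gamma> k - \<alpha> k)"
      proof (rule ext)
        fix k have "\<alpha> k + \<beta> k = \<gamma> k" using h by (simp add: fun_eq_iff)
        thus "\<beta> k = \<gamma> k - \<alpha> k" by simp
      qed
    next
      assume "\<beta> = (\<lambda>k. \<gamma> k - \<alpha> k)" thus "(\<lambda>k. \<alpha> k + \<beta> k) = \<gamma>" using le by (auto simp: fun_eq_iff)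
    qed
    have sA: "(\<lambda>k. \<gamma> k - \<alpha> k) \<in> ?A" by (rule Aset_sub[OF gA])
    have "(\<Sum>\<beta>\<in>?A. if (\<lambda>k. \<alpha> k + \<beta> k) = \<gamma>
         then (\<Prod>k\<in>{1..m}. of_nat ((\<alpha> k + \<beta> k) choose \<alpha> k)) * F \<alpha> * G \<beta> else 0)
       = (\<Sum>\<beta>\<in>?A. if \<beta> = (\<lambda>k. \<gamma> k - \<alpha> k)
         then (\<Prod>k\<in>{1..m}. of_nat ((\<alpha> k + \<beta> k) choose \<alpha> k)) * F \<alpha> * G \<beta> else 0)"
      by (simp only: eq)
    also have "\<dots> = (\<Prod>k\<in>{1..m}. of_nat ((\<alpha> k + (\<gamma> k - \<alpha> k)) choose \<alpha> k)) * F \<alpha> * G (\<lambda>k. \<gamma> k - \<alpha> k)"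
      using sA finite_Aset by (simp add: sum.delta')
    also have "\<dots> = ?H \<alpha>" using le by simp
    finally show ?thesis using True by simp
  next
    case False
    hence "(\<lambda>k. \<alpha> k + \<beta> k) \<noteq> \<gamma>" for \<beta> by (auto simp: Le_def)
    thus ?thesis using False by simp
  qed
  have "dpm m t p F G \<gamma> = (\<Sum>\<alpha>\<in>?A. if \<alpha> \<in> Le \<gamma> then ?H \<alpha> else 0)"
    using gA by (simp add: dpm_def inner)
  also have "\<dots> = (\<Sum>\<alpha>\<in>?A \<inter> Le \<gamma>. ?H \<alpha>)"
    by (rule sum.inter_restrict[OF finite_Aset, symmetric])
  also have "?A \<inter> Le \<gamma> = Le \<gamma>" using Le_subset[OF gA] by blast
  finally show ?thesis .
qed

lemma dpm_zero_left: "dpm m t p (\<lambda>_. 0) G \<gamma> = 0"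
  by (auto simp: dpm_def intro!: sum.neutral)

lemma dpm_zero_right: "dpm m t p F (\<lambda>_. 0) \<gamma> = 0"
  by (auto simp: dpm_def intro!: sum.neutral)

lemma dpm_cmult_right: "dpm m t p F (\<lambda>\<beta>. c * G \<beta>) \<gamma> = c * dpm m t p F G \<gamma>"
  unfolding dpm_def by (auto simp: sum_distrib_left mult_ac intro!: sum.cong)

lemma dpm_add_left: "dpm m t p (\<lambda>\<alpha>. F \<alpha> + H \<alpha>) G \<gamma> = dpm m t p F G \<gamma> + dpm m t p H G \<gamma>"
  unfolding dpm_def by (auto simp: sum.distrib[symmetric] algebra_simps intro!: sum.cong)

lemma dpm_sum_left: "finite K \<Longrightarrow> dpm m t p (\<lambda>\<alpha>. \<Sum>k\<in>K. F k \<alpha>) G \<gamma> = (\<Sum>k\<in>K. dpm m t p (F k) G \<gamma>)"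
  by (induction K rule: finite_induct) (simp_all add: dpm_zero_left dpm_add_left)

lemma dpm_cong: "(\<And>\<alpha>. \<alpha> \<in> Aset m t p \<Longrightarrow> F \<alpha> = F' \<alpha>) \<Longrightarrow> (\<And>\<beta>. \<beta> \<in> Aset m t p \<Longrightarrow> G \<beta> = G' \<beta>)
   \<Longrightarrow> dpm m t p F G \<gamma> = dpm m t p F' G' \<gamma>"
  by (simp add: dpm_def cong: sum.cong if_cong)

lemma dpm_unit:
  "dpm m t p (\<lambda>\<alpha>. if \<alpha> = (\<lambda>_. 0) then 1 else 0) G \<gamma> = (if \<gamma> \<in> Aset m t p then G \<gamma> else 0)"
proof (cases "\<gamma> \<in> Aset m t p")
  case True
  have z: "(\<lambda>_. 0::nat) \<in> Le \<gamma>" by (simp add: Le_def)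
  have "dpm m t p (\<lambda>\<alpha>. if \<alpha> = (\<lambda>_. 0) then 1 else 0) G \<gamma>
     = (\<Sum>\<alpha>\<in>Le \<gamma>. if \<alpha> = (\<lambda>_. 0) then G \<gamma> else 0)"
    using True by (auto simp: dpm_Le intro!: sum.cong)
  also have "\<dots> = G \<gamma>" using z finite_Le_A[OF True] by (simp add: sum.delta')
  finally show ?thesis using True by simp
qed (simp add: dpm_def)

lemma leibniz:
  fixes F G :: "(nat \<Rightarrow> nat) \<Rightarrow> 'a::field"
  assumes ch: "CHAR('a) = p" and pr: "prime p" and i: "i \<in> {1..m}" and gA: "\<gamma> \<in> Aset m t p"
  shows "dpm m t p F G (\<gamma>(i := \<gamma> i + p ^ e))
       = dpm m t p (shf m t p i (p ^ e) F) G \<gamma> + dpm m t p F (shf m t p i (p ^ e) G) \<gamma>"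
proof -
  define N where "N = p ^ e"
  define g' where "g' = \<gamma>(i := \<gamma> i + N)"
  let ?A = "Aset m t p"
  let ?sub = "\<lambda>\<delta> \<alpha>. (\<lambda>k::nat. \<delta> k - \<alpha> k)"
  define C' where "C' = (\<lambda>\<alpha>. \<Prod>k\<in>{1..m}-{i}. (of_nat (\<gamma> k choose \<alpha> k) :: 'a))"
  define R where "R = (\<lambda>\<alpha>. if \<alpha> \<in> ?A \<and> ?sub g' \<alpha> \<in> ?A then of_nat (g' i choose \<alpha> i) * C' \<alpha> * F \<alpha> * G (?sub g' \<alpha>) else 0)"
  define B1 where "B1 = (\<lambda>\<alpha>. if N \<le> \<alpha> i \<and> \<alpha> \<in> ?A \<and> ?sub g' \<alpha> \<in> ?A then of_nat (\<gamma> i choose (\<alpha> i - N)) * C' \<alpha> * F \<alpha> * G (?sub g' \<alpha>) else 0)"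
  define B2 where "B2 = (\<lambda>\<alpha>. if \<alpha> i \<le> \<gamma> i \<and> \<alpha> \<in> ?A \<and> ?sub g' \<alpha> \<in> ?A then of_nat (\<gamma> i choose \<alpha> i) * C' \<alpha> * F \<alpha> * G (?sub g' \<alpha>) else 0)"
  have supp: "\<forall>k. k \<notin> {1..m} \<longrightarrow> g' k = 0" using gA i unfolding g'_def Aset_def by auto
  have fin: "finite (Le g')" by (rule finite_Le[OF supp])
  have ptpos: "p ^ t i \<ge> 1" using prime_gt_0_nat[OF pr] by (simp add: Suc_le_eq)
  have prodsplit: "(\<Prod>k\<in>{1..m}. (of_nat (\<delta> k choose \<alpha> k) :: 'a)) = of_nat (\<delta> i choose \<alpha> i) * C' \<alpha>"
    if "\<forall>k. k \<noteq> i \<longrightarrow> \<delta> k = \<gamma> k" for \<delta> \<alpha>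
  proof -
    have "(\<Prod>k\<in>{1..m}. (of_nat (\<delta> k choose \<alpha> k) :: 'a)) = of_nat (\<delta> i choose \<alpha> i) * (\<Prod>k\<in>{1..m}-{i}. of_nat (\<delta> k choose \<alpha> k))"
      using i by (simp add: prod.remove)
    also have "(\<Prod>k\<in>{1..m}-{i}. (of_nat (\<delta> k choose \<alpha> k) :: 'a)) = C' \<alpha>"
      unfolding C'_def using that by (intro prod.cong) auto
    finally show ?thesis .
  qed
  have C'_upd: "C' (\<alpha>(i := c)) = C' \<alpha>" for \<alpha> c unfolding C'_def by (intro prod.cong) auto
  have L: "dpm m t p F G g' = (\<Sum>\<alpha>\<in>Le g'. R \<alpha>)"
  proof (cases "g' \<in> ?A")
    case True
    show ?thesis unfolding dpm_Le[OF True]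
    proof (rule sum.cong[OF refl])
      fix \<alpha> assume a: "\<alpha> \<in> Le g'"
      have aA: "\<alpha> \<in> ?A" using Le_subset[OF True] a by blast
      have sA: "?sub g' \<alpha> \<in> ?A" by (rule Aset_sub[OF True])
      show "(\<Prod>k\<in>{1..m}. of_nat (g' k choose \<alpha> k)) * F \<alpha> * G (?sub g' \<alpha>) = R \<alpha>"
        unfolding R_def using aA sA prodsplit[of g' \<alpha>] by (simp add: g'_def)
    qed
  next
    case False
    have gi: "g' i > p ^ t i - 1" using False Aset_upd[OF gA i] unfolding g'_def by auto
    have "R \<alpha> = 0" if a: "\<alpha> \<in> Le g'" for \<alpha>
    proof (cases "\<alpha> \<in> ?A \<and> ?sub g' \<alpha> \<in> ?A")
      case True
      have a1: "\<alpha> i \<le> p ^ t i - 1" using True i unfolding Aset_def by auto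
      have a2: "g' i - \<alpha> i \<le> p ^ t i - 1" using True i unfolding Aset_def by auto
      have a3: "\<alpha> i \<le> g' i" using a by (simp add: Le_def)
      have "(of_nat ((\<alpha> i + (g' i - \<alpha> i)) choose \<alpha> i) :: 'a) = 0"
        by (rule choose_kummer[OF ch pr, of _ "t i"]) (use a1 a2 a3 gi ptpos in linarith)+
      hence "(of_nat (g' i choose \<alpha> i) :: 'a) = 0" using a3 by simp
      thus ?thesis unfolding R_def by simp
    qed (auto simp: R_def)
    hence "(\<Sum>\<alpha>\<in>Le g'. R \<alpha>) = 0" by simp
    thus ?thesis using False by (simp add: dpm_def)
  qed
  have S1: "dpm m t p (shf m t p i N F) G \<gamma> = (\<Sum>\<alpha>\<in>Le g'. B1 \<alpha>)"
  proof -
    define h where "h = (\<lambda>\<beta>::nat\<Rightarrow>nat. \<beta>(i := \<beta> i + N))"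
    have inj: "inj_on h (Le \<gamma>)"
    proof (rule inj_onI)
      fix x y assume "h x = h y"
      hence "\<forall>k. (h x) k = (h y) k" by simp
      thus "x = y" unfolding h_def by (intro ext) (metis add_right_cancel fun_upd_apply)
    qed
    have "dpm m t p (shf m t p i N F) G \<gamma> = (\<Sum>\<beta>\<in>Le \<gamma>. B1 (h \<beta>))"
      unfolding dpm_Le[OF gA]
    proof (rule sum.cong[OF refl])
      fix \<beta> assume b: "\<beta> \<in> Le \<gamma>"
      have bA: "\<beta> \<in> ?A" using Le_subset[OF gA] b by blast
      have sub: "?sub g' (h \<beta>) = ?sub \<gamma> \<beta>" unfolding g'_def h_def by (rule ext) simp
      have sA: "?sub \<gamma> \<beta> \<in> ?A" by (rule Aset_sub[OF gA])
      show "(\<Prod>k\<in>{1..m}. of_nat (\<gamma> k choose \<beta> k)) * shf m t p i N F \<beta> * G (?sub \<gamma> \<beta>) = B1 (h \<beta>)"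
        unfolding B1_def shf_def sub using bA sA prodsplit[of \<gamma> \<beta>] C'_upd
        by (simp add: h_def)
    qed
    also have "\<dots> = (\<Sum>\<alpha>\<in>h ` Le \<gamma>. B1 \<alpha>)" by (simp add: sum.reindex[OF inj])
    also have "\<dots> = (\<Sum>\<alpha>\<in>Le g'. B1 \<alpha>)"
    proof (rule sum.mono_neutral_left[OF fin])
      show "h ` Le \<gamma> \<subseteq> Le g'" unfolding h_def g'_def Le_def by auto
      show "\<forall>\<alpha>\<in>Le g' - h ` Le \<gamma>. B1 \<alpha> = 0"
      proof
        fix \<alpha> assume a: "\<alpha> \<in> Le g' - h ` Le \<gamma>"
        show "B1 \<alpha> = 0"
        proof (cases "N \<le> \<alpha> i")
          case True
          have "\<alpha>(i := \<alpha> i - N) \<in> Le \<gamma>" using a True unfolding Le_def g'_def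
            by (auto simp: fun_upd_apply split: if_splits)
          moreover have "h (\<alpha>(i := \<alpha> i - N)) = \<alpha>" using True unfolding h_def by (intro ext) simp
          ultimately have False using a by (metis DiffD2 image_eqI)
          thus ?thesis ..
        qed (simp add: B1_def)
      qed
    qed
    finally show ?thesis .
  qed
  have S2: "dpm m t p F (shf m t p i N G) \<gamma> = (\<Sum>\<alpha>\<in>Le g'. B2 \<alpha>)"
  proof -
    have "dpm m t p F (shf m t p i N G) \<gamma> = (\<Sum>\<alpha>\<in>Le \<gamma>. B2 \<alpha>)"
      unfolding dpm_Le[OF gA]
    proof (rule sum.cong[OF refl])
      fix \<alpha> assume a: "\<alpha> \<in> Le \<gamma>"
      have aA: "\<alpha> \<in> ?A" using Le_subset[OF gA] a by blast
      have ai: "\<alpha> i \<le> \<gamma> i" using a by (simp add: Le_def)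
      have sA: "?sub \<gamma> \<alpha> \<in> ?A" by (rule Aset_sub[OF gA])
      have sub: "(?sub \<gamma> \<alpha>)(i := (?sub \<gamma> \<alpha>) i + N) = ?sub g' \<alpha>" unfolding g'_def using ai by (intro ext) simp
      show "(\<Prod>k\<in>{1..m}. of_nat (\<gamma> k choose \<alpha> k)) * F \<alpha> * shf m t p i N G (?sub \<gamma> \<alpha>) = B2 \<alpha>"
        unfolding B2_def shf_def sub using aA sA ai prodsplit[of \<gamma> \<alpha>] by simp
    qed
    also have "\<dots> = (\<Sum>\<alpha>\<in>Le g'. B2 \<alpha>)"
    proof (rule sum.mono_neutral_left[OF fin])
      show "Le \<gamma> \<subseteq> Le g'"
      proof
        fix x assume "x \<in> Le \<gamma>"
        hence "\<forall>k. x k \<le> \<gamma> k" by (simp add: Le_def)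
        moreover have "\<forall>k. \<gamma> k \<le> g' k" unfolding g'_def by simp
        ultimately show "x \<in> Le g'" unfolding Le_def using order_trans by blast
      qed
      show "\<forall>\<alpha>\<in>Le g' - Le \<gamma>. B2 \<alpha> = 0"
      proof
        fix \<alpha> assume a: "\<alpha> \<in> Le g' - Le \<gamma>"
        then obtain k where k: "\<alpha> k > \<gamma> k" by (auto simp: Le_def not_le)
        have "k = i"
        proof (rule ccontr)
          assume "k \<noteq> i"
          hence "g' k = \<gamma> k" by (simp add: g'_def)
          moreover have "\<alpha> k \<le> g' k" using a by (simp add: Le_def)
          ultimately show False using k by simp
        qed
        thus "B2 \<alpha> = 0" using k by (simp add: B2_def)
      qed
    qed
    finally show ?thesis .
  qed
  have comb: "B1 \<alpha> + B2 \<alpha> = R \<alpha>" for \<alpha>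
  proof (cases "\<alpha> \<in> ?A \<and> ?sub g' \<alpha> \<in> ?A")
    case True
    have V: "(of_nat (g' i choose \<alpha> i) :: 'a) = of_nat (\<gamma> i choose \<alpha> i) + (if N \<le> \<alpha> i then of_nat (\<gamma> i choose (\<alpha> i - N)) else 0)"
      unfolding g'_def N_def using choose_V[OF ch pr, of "\<gamma> i" e "\<alpha> i"] by simp
    have B2': "B2 \<alpha> = of_nat (\<gamma> i choose \<alpha> i) * C' \<alpha> * F \<alpha> * G (?sub g' \<alpha>)"
      using True by (cases "\<alpha> i \<le> \<gamma> i") (auto simp: B2_def binomial_eq_0)
    show ?thesis using True unfolding B2' unfolding B1_def R_def V by (simp add: algebra_simps)
  qed (auto simp: B1_def B2_def R_def)
  have "dpm m t p (shf m t p i N F) G \<gamma> + dpm m t p F (shf m t p i N G) \<gamma> = (\<Sum>\<alpha>\<in>Le g'. R \<alpha>)"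
    unfolding S1 S2 sum.distrib[symmetric] comb ..
  thus ?thesis using L unfolding g'_def N_def by simp
qed

definition L0 :: "'a sO \<Rightarrow> (nat \<Rightarrow> nat) \<Rightarrow> 'a" where
  "L0 f = (\<lambda>\<alpha>. f (\<alpha>, {}))"

definition XW :: "nat \<Rightarrow> nat \<Rightarrow> ((nat \<Rightarrow> nat) \<Rightarrow> 'a::zero) \<Rightarrow> 'a sO" where
  "XW m n P = (\<lambda>(\<gamma>, w). if w = omega m n then P \<gamma> else 0)"

definition dk :: "nat \<Rightarrow> (nat \<Rightarrow> nat) \<Rightarrow> nat \<Rightarrow> nat \<Rightarrow> ((nat \<Rightarrow> nat) \<Rightarrow> 'a::zero) \<Rightarrow> (nat \<Rightarrow> nat) \<Rightarrow> 'a" where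
  "dk m t p k F \<gamma> = (if \<gamma> \<in> Aset m t p \<and> \<gamma>(k := \<gamma> k + 1) \<in> Aset m t p then F (\<gamma>(k := \<gamma> k + 1)) else 0)"

lemma sum_single:
  assumes "finite S" "a \<in> S" "\<And>x. x \<in> S \<Longrightarrow> x \<noteq> a \<Longrightarrow> f x = 0"
  shows "sum f S = f a"
proof -
  have "sum f S = f a + sum f (S - {a})" using assms(1,2) by (rule sum.remove)
  also have "sum f (S - {a}) = 0" using assms(3) by (intro sum.neutral) auto
  finally show ?thesis by simp
qed

lemma sum_single':
  assumes "finite S" "a \<in> S" "\<And>x. x \<in> S \<Longrightarrow> x \<noteq> a \<Longrightarrow> f x = 0" "f a = c"
  shows "sum f S = c"
  using sum_single[OF assms(1-3)] assms(4) by simp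

lemma Bas_iff: "((\<gamma>, w) \<in> Bas m n t p) = (\<gamma> \<in> Aset m t p \<and> w \<subseteq> {m+1..m+n})"
  by (simp add: Bas_def)

lemma omul_w0: "omul m n t p f g (\<gamma>, {}) = dpm m t p (L0 f) (L0 g) \<gamma>"
proof (cases "\<gamma> \<in> Aset m t p")
  case True
  let ?P = "Pow {m+1..m+n}"
  have "omul m n t p f g (\<gamma>, {}) = (\<Sum>u\<in>?P. \<Sum>v\<in>?P.
        if u \<inter> v = {} \<and> u \<union> v = {} then sign_uv u v * dpm m t p (\<lambda>\<alpha>. f (\<alpha>, u)) (\<lambda>\<beta>. g (\<beta>, v)) \<gamma> else 0)"
    using True by (simp add: omul_layers Bas_iff)
  also have "\<dots> = (\<Sum>v\<in>?P. if {} \<inter> v = {} \<and> {} \<union> v = {} then sign_uv {} v * dpm m t p (\<lambda>\<alpha>. f (\<alpha>, {})) (\<lambda>\<beta>. g (\<beta>, v)) \<gamma> else 0)"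
    by (rule sum_single'[where a="{}"]) (auto cong: if_cong)
  also have "\<dots> = sign_uv {} {} * dpm m t p (\<lambda>\<alpha>. f (\<alpha>, {})) (\<lambda>\<beta>. g (\<beta>, {})) \<gamma>"
    by (rule sum_single'[where a="{}"]) (auto cong: if_cong)
  also have "\<dots> = dpm m t p (L0 f) (L0 g) \<gamma>" by (simp add: sign_uv_def L0_def)
  finally show ?thesis .
qed (simp add: omul_def Bas_iff dpm_def)

lemma sign_empty1: "sign_uv {} v = 1" by (simp add: sign_uv_def)
lemma sign_empty2: "sign_uv u {} = 1" by (simp add: sign_uv_def)

lemma omul_XW_left:
  "omul m n t p (XW m n P) g (\<gamma>, w) = (if \<gamma> \<in> Aset m t p \<and> w = omega m n then dpm m t p P (L0 g) \<gamma> else 0)"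
proof (cases "(\<gamma>, w) \<in> Bas m n t p")
  case True
  let ?P = "Pow {m+1..m+n}" and ?\<omega> = "omega m n"
  have lay: "(\<lambda>\<alpha>. XW m n P (\<alpha>, u)) = (if u = ?\<omega> then P else (\<lambda>_. 0))" for u
    by (auto simp: XW_def)
  have "omul m n t p (XW m n P) g (\<gamma>, w) = (\<Sum>u\<in>?P. \<Sum>v\<in>?P.
        if u \<inter> v = {} \<and> u \<union> v = w then sign_uv u v * dpm m t p (\<lambda>\<alpha>. XW m n P (\<alpha>, u)) (\<lambda>\<beta>. g (\<beta>, v)) \<gamma> else 0)"
    using True by (simp add: omul_layers)
  also have "\<dots> = (\<Sum>v\<in>?P. if ?\<omega> \<inter> v = {} \<and> ?\<omega> \<union> v = w then sign_uv ?\<omega> v * dpm m t p (\<lambda>\<alpha>. XW m n P (\<alpha>, ?\<omega>)) (\<lambda>\<beta>. g (\<beta>, v)) \<gamma> else 0)"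
    by (rule sum_single'[where a="omega m n"]) (auto simp: omega_def lay dpm_zero_left cong: if_cong)
  also have "\<dots> = (if ?\<omega> \<inter> {} = {} \<and> ?\<omega> \<union> {} = w then sign_uv ?\<omega> {} * dpm m t p (\<lambda>\<alpha>. XW m n P (\<alpha>, ?\<omega>)) (\<lambda>\<beta>. g (\<beta>, {})) \<gamma> else 0)"
    by (rule sum_single'[where a="{}"]) (auto simp: omega_def cong: if_cong)
  also have "\<dots> = (if \<gamma> \<in> Aset m t p \<and> w = omega m n then dpm m t p P (L0 g) \<gamma> else 0)"
    using True by (auto simp: sign_empty2 lay L0_def Bas_iff)
  finally show ?thesis .
next
  case False
  thus ?thesis by (auto simp: omul_def Bas_iff omega_def)
qed

lemma omul_XW_right:
  "omul m n t p f (XW m n R) (\<gamma>, w) = (if \<gamma> \<in> Aset m t p \<and> w = omega m n then dpm m t p (L0 f) R \<gamma> else 0)"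
proof (cases "(\<gamma>, w) \<in> Bas m n t p")
  case True
  let ?P = "Pow {m+1..m+n}" and ?\<omega> = "omega m n"
  have lay: "(\<lambda>\<alpha>. XW m n R (\<alpha>, u)) = (if u = ?\<omega> then R else (\<lambda>_. 0))" for u
    by (auto simp: XW_def)
  have "omul m n t p f (XW m n R) (\<gamma>, w) = (\<Sum>u\<in>?P. \<Sum>v\<in>?P.
        if u \<inter> v = {} \<and> u \<union> v = w then sign_uv u v * dpm m t p (\<lambda>\<alpha>. f (\<alpha>, u)) (\<lambda>\<beta>. XW m n R (\<beta>, v)) \<gamma> else 0)"
    using True by (simp add: omul_layers)
  also have "\<dots> = (\<Sum>u\<in>?P. if u \<inter> ?\<omega> = {} \<and> u \<union> ?\<omega> = w then sign_uv u ?\<omega> * dpm m t p (\<lambda>\<alpha>. f (\<alpha>, u)) (\<lambda>\<beta>. XW m n R (\<beta>, ?\<omega>)) \<gamma> else 0)"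
    by (intro sum.cong[OF refl] sum_single'[where a="omega m n"]) (auto simp: omega_def lay dpm_zero_right cong: if_cong)
  also have "\<dots> = (if {} \<inter> ?\<omega> = {} \<and> {} \<union> ?\<omega> = w then sign_uv {} ?\<omega> * dpm m t p (\<lambda>\<alpha>. f (\<alpha>, {})) (\<lambda>\<beta>. XW m n R (\<beta>, ?\<omega>)) \<gamma> else 0)"
    by (rule sum_single'[where a="{}"]) (auto simp: omega_def cong: if_cong)
  also have "\<dots> = (if \<gamma> \<in> Aset m t p \<and> w = omega m n then dpm m t p (L0 f) R \<gamma> else 0)"
    using True by (auto simp: sign_empty1 lay L0_def Bas_iff)
  finally show ?thesis .
next
  case False
  thus ?thesis by (auto simp: omul_def Bas_iff omega_def)
qed

lemma omul_zero_right: "omul m n t p f (\<lambda>_. 0) z = 0"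
  by (cases z) (simp add: omul_def cong: if_cong)

lemma omul_zero_left: "omul m n t p (\<lambda>_. 0) g z = 0"
  by (cases z) (simp add: omul_def cong: if_cong)

lemma oderiv_zero: "oderiv m n t p k (\<lambda>_. 0) = (\<lambda>_. 0)"
  by (auto simp: oderiv_def)

lemma oderiv_add: "oderiv m n t p k (\<lambda>z. f z + g z) z = oderiv m n t p k f z + oderiv m n t p k g z"
  by (cases z) (auto simp: oderiv_def algebra_simps)

lemma L0_oderiv: "k \<in> {1..m} \<Longrightarrow> L0 (oderiv m n t p k h) = dk m t p k (L0 h)"
  by (auto simp: L0_def dk_def oderiv_def Bas_iff)

lemma oderiv_XW_even: "k \<in> {1..m} \<Longrightarrow> oderiv m n t p k (XW m n Q) = XW m n (dk m t p k Q)"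
  by (auto simp: XW_def dk_def oderiv_def Bas_iff omega_def)

lemma XW_zero: "XW m n (\<lambda>_. 0) = (\<lambda>_. 0)"
  by (auto simp: XW_def)

lemma sign_single:
  "(sign_uv {k} v :: 'a::field) * (-1) ^ card {l \<in> v. l < k} = 1"
proof -
  have "{(a, b). a \<in> {k} \<and> b \<in> v \<and> b < a} = (\<lambda>b. (k, b)) ` {l \<in> v. l < k}" by auto
  moreover have "inj_on (\<lambda>b. (k, b)) {l \<in> v. l < k}" by (auto simp: inj_on_def)
  ultimately have c: "card {(a, b). a \<in> {k} \<and> b \<in> v \<and> b < a} = card {l \<in> v. l < k}"
    by (simp add: card_image)
  show ?thesis unfolding sign_uv_def c by (simp add: minus_one_power_iff)
qed

lemma omul_odd:
  fixes f :: "'a::field sO"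
  assumes k: "k \<in> {m+1..m+n}" and fo: "\<forall>\<alpha> u. f (\<alpha>, u) \<noteq> 0 \<longrightarrow> odd (card u)"
  shows "omul m n t p f (oderiv m n t p k (XW m n Q)) (\<gamma>, w)
       = (if \<gamma> \<in> Aset m t p \<and> w = omega m n then dpm m t p (\<lambda>\<alpha>. f (\<alpha>, {k})) Q \<gamma> else 0)"
proof (cases "(\<gamma>, w) \<in> Bas m n t p")
  case True
  let ?P = "Pow {m+1..m+n}" and ?\<omega> = "omega m n" and ?A = "Aset m t p"
  define v0 where "v0 = omega m n - {k}"
  define s where "s = ((-1) ^ card {l \<in> v0. l < k} :: 'a)"
  let ?g = "oderiv m n t p k (XW m n Q)"
  have knm: "k \<notin> {1..m}" using k by auto
  have v0P: "v0 \<in> ?P" by (auto simp: v0_def omega_def)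
  have lay: "(\<lambda>\<beta>. ?g (\<beta>, v)) = (if v = v0 then (\<lambda>\<beta>. if \<beta> \<in> ?A then s * Q \<beta> else 0) else (\<lambda>_. 0))"
    if vP: "v \<in> ?P" for v
  proof (cases "v = v0")
    case True
    have "k \<notin> v0" "insert k v0 = ?\<omega>" using k by (auto simp: v0_def omega_def)
    thus ?thesis using True v0P knm k by (auto simp: oderiv_def XW_def Bas_iff s_def)
  next
    case False
    have "\<not> (k \<notin> v \<and> insert k v = ?\<omega>)"
    proof
      assume "k \<notin> v \<and> insert k v = ?\<omega>"
      hence "v = v0" unfolding v0_def by auto
      thus False using False by simp
    qed
    thus ?thesis using False knm k by (auto simp: oderiv_def XW_def Bas_iff fun_eq_iff)
  qed
  have f0: "(\<lambda>\<alpha>. f (\<alpha>, {})) = (\<lambda>_. 0)" using fo by fastforce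
  have "omul m n t p f ?g (\<gamma>, w) = (\<Sum>u\<in>?P. \<Sum>v\<in>?P.
        if u \<inter> v = {} \<and> u \<union> v = w then sign_uv u v * dpm m t p (\<lambda>\<alpha>. f (\<alpha>, u)) (\<lambda>\<beta>. ?g (\<beta>, v)) \<gamma> else 0)"
    using True by (simp add: omul_layers)
  also have "\<dots> = (\<Sum>u\<in>?P. if u \<inter> v0 = {} \<and> u \<union> v0 = w then sign_uv u v0 * dpm m t p (\<lambda>\<alpha>. f (\<alpha>, u)) (\<lambda>\<beta>. ?g (\<beta>, v0)) \<gamma> else 0)"
    by (intro sum.cong[OF refl] sum_single'[where a=v0]) (auto simp: v0P v0_def omega_def lay dpm_zero_right cong: if_cong)
  also have "\<dots> = (if {k} \<inter> v0 = {} \<and> {k} \<union> v0 = w then sign_uv {k} v0 * dpm m t p (\<lambda>\<alpha>. f (\<alpha>, {k})) (\<lambda>\<beta>. ?g (\<beta>, v0)) \<gamma> else 0)"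
  proof (rule sum_single'[where a="{k}"])
    show "{k} \<in> ?P" using k by auto
    fix u assume uP: "u \<in> ?P" and uk: "u \<noteq> {k}"
    show "(if u \<inter> v0 = {} \<and> u \<union> v0 = w then sign_uv u v0 * dpm m t p (\<lambda>\<alpha>. f (\<alpha>, u)) (\<lambda>\<beta>. ?g (\<beta>, v0)) \<gamma> else 0) = 0"
    proof (cases "u = {}")
      case True thus ?thesis using f0 by (simp add: dpm_zero_left)
    next
      case False
      then obtain x where x: "x \<in> u" by blast
      have "x \<noteq> k \<or> (\<exists>y\<in>u. y \<noteq> k)" using uk x by blast
      then obtain y where y: "y \<in> u" "y \<noteq> k" using x uk False by blast
      have "y \<in> v0" using y uP by (auto simp: v0_def omega_def)
      hence "u \<inter> v0 \<noteq> {}" using y by blast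
      thus ?thesis by simp
    qed
  qed simp_all
  also have "\<dots> = (if \<gamma> \<in> ?A \<and> w = omega m n then dpm m t p (\<lambda>\<alpha>. f (\<alpha>, {k})) Q \<gamma> else 0)"
  proof -
    have e1: "{k} \<inter> v0 = {}" "{k} \<union> v0 = ?\<omega>" using k by (auto simp: v0_def omega_def)
    have "dpm m t p (\<lambda>\<alpha>. f (\<alpha>, {k})) (\<lambda>\<beta>. ?g (\<beta>, v0)) \<gamma> = dpm m t p (\<lambda>\<alpha>. f (\<alpha>, {k})) (\<lambda>\<beta>. s * Q \<beta>) \<gamma>"
      by (intro dpm_cong) (use fun_cong[OF lay[OF v0P]] in auto)
    also have "\<dots> = s * dpm m t p (\<lambda>\<alpha>. f (\<alpha>, {k})) Q \<gamma>" by (rule dpm_cmult_right)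
    finally have "sign_uv {k} v0 * dpm m t p (\<lambda>\<alpha>. f (\<alpha>, {k})) (\<lambda>\<beta>. ?g (\<beta>, v0)) \<gamma> = dpm m t p (\<lambda>\<alpha>. f (\<alpha>, {k})) Q \<gamma>"
      using sign_single[of k v0] unfolding s_def by (auto simp: mult.assoc[symmetric])
    thus ?thesis using e1 True by (auto simp: Bas_iff)
  qed
  finally show ?thesis .
next
  case False
  thus ?thesis by (auto simp: omul_def Bas_iff omega_def)
qed

lemma oderiv_pow:
  assumes i: "i \<in> {1..m}"
  shows "(oderiv m n t p i ^^ Suc k) f (\<beta>, v) = (if (\<beta>, v) \<in> Bas m n t p \<and> \<beta>(i := \<beta> i + Suc k) \<in> Aset m t p then f (\<beta>(i := \<beta> i + Suc k), v) else 0)"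
proof (induction k arbitrary: \<beta>)
  case 0
  show ?case using i by (auto simp: oderiv_def simp del: fun_upd_apply)
next
  case (Suc k)
  let ?b1 = "\<beta>(i := \<beta> i + 1)"
  define g where "g = (oderiv m n t p i ^^ Suc k) f"
  have "(oderiv m n t p i ^^ Suc (Suc k)) f (\<beta>, v) = oderiv m n t p i g (\<beta>, v)"
    by (simp add: g_def)
  also have "\<dots> = (if (\<beta>, v) \<in> Bas m n t p \<and> \<beta>(i := \<beta> i + Suc (Suc k)) \<in> Aset m t p then f (\<beta>(i := \<beta> i + Suc (Suc k)), v) else 0)"
  proof (cases "(\<beta>, v) \<in> Bas m n t p")
    case True
    hence bA: "\<beta> \<in> Aset m t p" by (simp add: Bas_iff)
    have od: "oderiv m n t p i g (\<beta>, v) = (if ?b1 \<in> Aset m t p then g (?b1, v) else 0)"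
      using True i by (simp add: oderiv_def)
    have IH: "g (?b1, v) = (if (?b1, v) \<in> Bas m n t p \<and> ?b1(i := ?b1 i + Suc k) \<in> Aset m t p then f (?b1(i := ?b1 i + Suc k), v) else 0)"
      unfolding g_def by (rule Suc.IH)
    have upd: "?b1(i := ?b1 i + Suc k) = \<beta>(i := \<beta> i + Suc (Suc k))" by simp
    have iff1: "(\<beta>(i := \<beta> i + Suc (Suc k)) \<in> Aset m t p) = (\<beta> i + Suc (Suc k) \<le> p ^ t i - 1)"
      by (rule Aset_upd[OF bA i])
    have iff2: "(?b1 \<in> Aset m t p) = (\<beta> i + 1 \<le> p ^ t i - 1)" by (rule Aset_upd[OF bA i])
    have b1B: "?b1 \<in> Aset m t p \<Longrightarrow> (?b1, v) \<in> Bas m n t p" using True by (simp add: Bas_iff)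
    show ?thesis
    proof (cases "\<beta>(i := \<beta> i + Suc (Suc k)) \<in> Aset m t p")
      case True2: True
      hence "?b1 \<in> Aset m t p" using iff1 iff2 by simp
      thus ?thesis using od IH upd b1B True True2 by simp
    next
      case False2: False
      show ?thesis using od IH upd False2 by (simp only: if_False) (simp add: upd)
    qed
  qed (simp add: oderiv_def)
  finally show ?case .
qed

lemma omul_unit: "omul m n t p (bas (\<lambda>_. 0, {})) g (\<gamma>, w) = (if (\<gamma>, w) \<in> Bas m n t p then g (\<gamma>, w) else 0)"
proof (cases "(\<gamma>, w) \<in> Bas m n t p")
  case True
  let ?P = "Pow {m+1..m+n}"
  have lay: "(\<lambda>\<alpha>. bas (\<lambda>_. 0, {}) (\<alpha>, u)) = (if u = {} then (\<lambda>\<alpha>. if \<alpha> = (\<lambda>_. 0) then 1 else 0) else (\<lambda>_. 0))" for u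
    by (auto simp: bas_def fun_eq_iff)
  have wP: "w \<in> ?P" using True by (simp add: Bas_iff)
  have "omul m n t p (bas (\<lambda>_. 0, {})) g (\<gamma>, w) = (\<Sum>u\<in>?P. \<Sum>v\<in>?P.
        if u \<inter> v = {} \<and> u \<union> v = w then sign_uv u v * dpm m t p (\<lambda>\<alpha>. bas (\<lambda>_. 0, {}) (\<alpha>, u)) (\<lambda>\<beta>. g (\<beta>, v)) \<gamma> else 0)"
    using True by (simp add: omul_layers)
  also have "\<dots> = (\<Sum>v\<in>?P. if {} \<inter> v = {} \<and> {} \<union> v = w then sign_uv {} v * dpm m t p (\<lambda>\<alpha>. bas (\<lambda>_. 0, {}) (\<alpha>, {})) (\<lambda>\<beta>. g (\<beta>, v)) \<gamma> else 0)"
    by (rule sum_single'[where a="{}"]) (auto simp: lay dpm_zero_left cong: if_cong)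
  also have "\<dots> = sign_uv {} w * dpm m t p (\<lambda>\<alpha>. bas (\<lambda>_. 0, {}) (\<alpha>, {})) (\<lambda>\<beta>. g (\<beta>, w)) \<gamma>"
    by (rule sum_single'[where a="w"]) (use True in \<open>auto simp: Bas_iff\<close>)
  also have "\<dots> = g (\<gamma>, w)" using True by (simp add: sign_empty1 lay dpm_unit Bas_iff)
  finally show ?thesis using True by simp
qed (simp add: omul_def)

lemma oderiv_unit: "oderiv m n t p k (bas (\<lambda>_. 0, {})) = (\<lambda>_. 0)"
proof (rule ext)
  fix z :: idx
  obtain \<beta> v where z: "z = (\<beta>, v)" by (cases z)
  have "\<beta>(k := \<beta> k + 1) \<noteq> (\<lambda>_. 0)" by (metis fun_upd_same add_is_0 zero_neq_one)
  thus "oderiv m n t p k (bas (\<lambda>_. 0, {})) z = 0" unfolding z by (auto simp: oderiv_def bas_def)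
qed

lemma opart_sum: "opart f c z + opart f (\<not> c) z = f z"
  by (cases z) (simp add: opart_def)

lemma Wbr_dW:
  assumes i: "i \<in> {1..m}"
  shows "Wbr m n t p (dW i) E = (\<lambda>j. oderiv m n t p i (E j))"
proof (intro ext)
  fix j :: nat and z :: idx
  obtain \<gamma> w where z: "z = (\<gamma>, w)" by (cases z)
  have WpT: "Wpart m (dW i :: 'a sW) True = (\<lambda>_ _. 0)"
    using i by (auto simp: Wpart_def dW_def opart_def bas_def fun_eq_iff)
  have WpF: "Wpart m (dW i :: 'a sW) False = dW i"
    using i by (auto simp: Wpart_def dW_def opart_def bas_def fun_eq_iff)
  have brh0: "brh m n t p True b (\<lambda>_ _. 0) E' j z = 0" for b and E' :: "'a sW"
    by (simp add: brh_def Wapp_def omul_zero_left oderiv_zero omul_zero_right)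
  have Wapp_dW: "Wapp m n t p (dW i) h z = oderiv m n t p i h z" for h :: "'a sO"
  proof -
    have "Wapp m n t p (dW i) h z = omul m n t p (bas (\<lambda>_. 0, {})) (oderiv m n t p i h) z"
      unfolding Wapp_def
      by (rule sum_single'[where a=i]) (use i in \<open>auto simp: dW_def omul_zero_left\<close>)
    also have "\<dots> = oderiv m n t p i h z" unfolding z omul_unit by (simp add: oderiv_def)
    finally show ?thesis .
  qed
  have Wapp_E: "Wapp m n t p E' (dW i j) z = 0" for E' :: "'a sW"
    by (simp add: Wapp_def dW_def oderiv_unit oderiv_zero omul_zero_right)
  have "Wbr m n t p (dW i) E j z = (\<Sum>b\<in>UNIV. brh m n t p False b (dW i) (Wpart m E b) j z)"
    by (simp add: Wbr_def UNIV_bool WpT WpF brh0)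
  also have "\<dots> = (\<Sum>b\<in>UNIV. oderiv m n t p i (Wpart m E b j) z)"
    by (simp add: brh_def Wapp_dW Wapp_E)
  also have "\<dots> = oderiv m n t p i (E j) z"
    by (simp add: UNIV_bool Wpart_def oderiv_add[symmetric] opart_sum add.commute)
  finally show "Wbr m n t p (dW i) E j z = oderiv m n t p i (E j) z" .
qed

lemma Wbr_pow:
  assumes i: "i \<in> {1..m}"
  shows "((\<lambda>E. Wbr m n t p (dW i) E) ^^ k) D = (\<lambda>j. (oderiv m n t p i ^^ k) (D j))"
  by (induction k) (simp_all add: Wbr_dW[OF i])

lemma Theta_closed:
  assumes i: "i \<in> {1..m}" and pp: "p > 0"
  shows "Theta m n t p i q D = (\<lambda>j. XW m n (shf m t p i (p ^ q) (L0 (D j))))"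
proof (intro ext)
  fix j :: nat and z :: idx
  obtain \<gamma> w where z: "z = (\<gamma>, w)" by (cases z)
  obtain k where k: "p ^ q = Suc k" using pp by (metis gr0_implies_Suc zero_less_power)
  have b: "bas (\<lambda>_. 0, omega m n) = XW m n (\<lambda>\<alpha>. if \<alpha> = (\<lambda>_. 0) then 1 else 0)"
    by (auto simp: bas_def XW_def fun_eq_iff)
  have op: "(oderiv m n t p i ^^ p ^ q) (D j) (\<gamma>, {}) = (if (\<gamma>, {}) \<in> Bas m n t p \<and> \<gamma>(i := \<gamma> i + p ^ q) \<in> Aset m t p then D j (\<gamma>(i := \<gamma> i + p ^ q), {}) else 0)"
    unfolding k by (rule oderiv_pow[OF i])
  show "Theta m n t p i q D j z = XW m n (shf m t p i (p ^ q) (L0 (D j))) z"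
    unfolding Theta_def z b omul_XW_left Wbr_pow[OF i]
    by (simp add: dpm_unit L0_def op Bas_iff XW_def shf_def)
qed

definition good :: "nat \<Rightarrow> nat \<Rightarrow> (nat \<Rightarrow> nat) \<Rightarrow> nat \<Rightarrow> 'a::field sW \<Rightarrow> bool" where
  "good m n t p x = ((\<forall>j. j \<notin> {1..m+n} \<longrightarrow> x j = (\<lambda>_. 0))
     \<and> (\<forall>j \<alpha> u. x j (\<alpha>, u) \<noteq> 0 \<longrightarrow> (odd (card u) \<longleftrightarrow> m < j))
     \<and> (\<forall>\<alpha>. (\<Sum>k\<in>{m+1..m+n}. x k (\<alpha>, {k})) = 0))"

lemma prm_I0: "even m \<Longrightarrow> j \<in> {1..m} \<Longrightarrow> prm m n j \<in> {1..m}"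
  by (auto simp: prm_def Let_def elim!: evenE)

lemma prm_I1: "j \<in> {m+1..m+n} \<Longrightarrow> prm m n j \<in> {m+1..m+n}"
  by (auto simp: prm_def Let_def)

lemma DH_even:
  assumes fe: "\<forall>\<alpha> u. f (\<alpha>, u) \<noteq> 0 \<longrightarrow> even (card u)"
  shows "DH m n t p f j z = (if j \<in> {1..m+n} then tau m (prm m n j) * oderiv m n t p (prm m n j) f z else 0)"
proof -
  have oT: "opart f True = (\<lambda>_. 0)" using fe by (auto simp: opart_def fun_eq_iff)
  have oF: "opart f False = f" using fe by (auto simp: opart_def fun_eq_iff)
  show ?thesis by (simp add: DH_def Let_def UNIV_bool oT oF oderiv_zero)
qed

lemma oderiv_parity:
  assumes fe: "\<forall>\<alpha> u. f (\<alpha>, u) \<noteq> 0 \<longrightarrow> even (card u)"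
    and nz: "oderiv m n t p i f (\<beta>, v) \<noteq> 0"
  shows "odd (card v) \<longleftrightarrow> m < i"
proof -
  have B: "(\<beta>, v) \<in> Bas m n t p" using nz by (cases "(\<beta>, v) \<in> Bas m n t p") (simp_all add: oderiv_def)
  hence fv: "finite v" by (auto simp: Bas_iff intro: finite_subset)
  show ?thesis
  proof (cases "i \<in> {1..m}")
    case True
    then obtain \<beta>' where "f (\<beta>', v) \<noteq> 0" using nz by (auto simp: oderiv_def split: if_splits)
    thus ?thesis using fe True by auto
  next
    case False
    hence iI: "i \<in> {m+1..m+n}" and iv: "i \<notin> v" and fz: "f (\<beta>, insert i v) \<noteq> 0"
      using nz by (auto simp: oderiv_def split: if_splits)
    have "even (card (insert i v))" using fe fz by blast
    hence "odd (card v)" using fv iv by simp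
    thus ?thesis using iI by simp
  qed
qed

lemma DH_parity:
  assumes me: "even m" and fe: "\<forall>\<alpha> u. f (\<alpha>, u) \<noteq> 0 \<longrightarrow> even (card u)"
    and nz: "DH m n t p f j (\<beta>, v) \<noteq> 0"
  shows "odd (card v) \<longleftrightarrow> m < j"
proof -
  have j: "j \<in> {1..m+n}" and o: "oderiv m n t p (prm m n j) f (\<beta>, v) \<noteq> 0"
    using nz by (auto simp: DH_even[OF fe] split: if_splits)
  have "odd (card v) \<longleftrightarrow> m < prm m n j" by (rule oderiv_parity[OF fe o])
  moreover have "m < prm m n j \<longleftrightarrow> m < j"
  proof (cases "j \<le> m")
    case True thus ?thesis using prm_I0[OF me, of j n] j by auto
  next
    case False thus ?thesis using prm_I1[of j m n] j by auto
  qed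
  ultimately show ?thesis by simp
qed

lemma DH_phi:
  assumes fe: "\<forall>\<alpha> u. f (\<alpha>, u) \<noteq> 0 \<longrightarrow> even (card u)" and k: "k \<in> {m+1..m+n}"
  shows "DH m n t p f k (\<alpha>, {k}) = (if \<alpha> \<in> Aset m t p \<and> prm m n k \<noteq> k then (if k < prm m n k then -1 else 1) * f (\<alpha>, {prm m n k, k}) else 0)"
proof -
  have i: "prm m n k \<in> {m+1..m+n}" by (rule prm_I1[OF k])
  have tau: "tau m (prm m n k) = (1::'a)" using i by (simp add: tau_def)
  have c0: "{l \<in> {k}. l < prm m n k} = (if k < prm m n k then {k} else {})" by auto
  have c: "card {l \<in> {k}. l < prm m n k} = (if k < prm m n k then 1 else 0)" unfolding c0 by simp
  have c': "card {l. l = k \<and> l < prm m n k} = (if k < prm m n k then 1 else 0)" using c by simp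
  show ?thesis using k i
    by (auto simp: DH_even[OF fe] tau oderiv_def Bas_iff c c')
qed

lemma DH_div:
  assumes fe: "\<forall>\<alpha> u. f (\<alpha>, u) \<noteq> 0 \<longrightarrow> even (card u)" and no: "odd n"
  shows "(\<Sum>k\<in>{m+1..m+n}. DH m n t p f k (\<alpha>, {k})) = 0"
proof -
  define s where "s = n div 2"
  have n: "n = 2 * s + 1" using no unfolding s_def by presburger
  let ?phi = "\<lambda>k. DH m n t p f k (\<alpha>, {k})"
  have p1: "prm m n k = k + s" if "k \<in> {m+1..m+s}" for k using that n by (auto simp: prm_def Let_def)
  have p2: "prm m n (k + s) = k" if "k \<in> {m+1..m+s}" for k using that n by (auto simp: prm_def Let_def)
  have p3: "prm m n (m + n) = m + n" using n by (auto simp: prm_def Let_def)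
  have split: "{m+1..m+n} = {m+1..m+s} \<union> ({m+1+s..m+s+s} \<union> {m+n})" using n by auto
  have "(\<Sum>k\<in>{m+1..m+n}. ?phi k) = (\<Sum>k\<in>{m+1..m+s}. ?phi k) + ((\<Sum>k\<in>{m+1+s..m+s+s}. ?phi k) + ?phi (m+n))"
  proof -
    have d1: "{m+1..m+s} \<inter> ({m+1+s..m+s+s} \<union> {m+n}) = {}" using n by auto
    have d2: "{m+1+s..m+s+s} \<inter> {m+n} = {}" using n by auto
    have e1: "sum ?phi ({m+1..m+s} \<union> ({m+1+s..m+s+s} \<union> {m+n})) = sum ?phi {m+1..m+s} + sum ?phi ({m+1+s..m+s+s} \<union> {m+n})"
      by (rule sum.union_disjoint) (use d1 in auto)
    have nin: "m + n \<notin> {m+1+s..m+s+s}" using n by auto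
    have e2: "sum ?phi ({m+1+s..m+s+s} \<union> {m+n}) = sum ?phi {m+1+s..m+s+s} + ?phi (m+n)"
      using nin by (simp add: add.commute)
    show ?thesis unfolding split e1 e2 ..
  qed
  also have "(\<Sum>k\<in>{m+1+s..m+s+s}. ?phi k) = (\<Sum>k\<in>{m+1..m+s}. ?phi (k + s))"
    by (rule sum.shift_bounds_cl_nat_ivl)
  also have "?phi (m+n) = 0" using p3 DH_phi[OF fe, of "m+n" m n t p \<alpha>] n by simp
  also have "(\<Sum>k\<in>{m+1..m+s}. ?phi k) + ((\<Sum>k\<in>{m+1..m+s}. ?phi (k + s)) + 0) = (\<Sum>k\<in>{m+1..m+s}. ?phi k + ?phi (k + s))"
    by (simp add: sum.distrib)
  also have "\<dots> = 0"
  proof (rule sum.neutral, rule ballI)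
    fix k assume k: "k \<in> {m+1..m+s}"
    have k1: "k \<in> {m+1..m+n}" "k + s \<in> {m+1..m+n}" using k n by auto
    have sp: "s > 0" using k by auto
    have e: "{k + s, k} = {k, k + s}" by auto
    show "?phi k + ?phi (k + s) = 0"
      using p1[OF k] p2[OF k] sp by (simp add: DH_phi[OF fe k1(1)] DH_phi[OF fe k1(2)] e)
  qed
  finally show ?thesis .
qed

lemma bas_even: "y \<in> HB m n t p \<Longrightarrow> \<forall>\<alpha> u. bas y (\<alpha>, u) \<noteq> (0::'a::field) \<longrightarrow> even (card u)"
  by (auto simp: bas_def HB_def)

lemma H0_good:
  assumes me: "even m" and no: "odd n" and x: "x \<in> (H0 m n t p :: 'a::field sW set)"
  shows "good m n t p x"
proof -
  obtain c :: "idx \<Rightarrow> 'a" where xc: "x = (\<lambda>j z. \<Sum>y\<in>HB m n t p. c y * DH m n t p (bas y) j z)"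
    using x by (auto simp: H0_def)
  have P1: "\<forall>j. j \<notin> {1..m+n} \<longrightarrow> x j = (\<lambda>_. 0)"
    by (auto simp: xc DH_def)
  have P3: "\<forall>j \<alpha> u. x j (\<alpha>, u) \<noteq> 0 \<longrightarrow> (odd (card u) \<longleftrightarrow> m < j)"
  proof (intro allI impI)
    fix j \<alpha> u assume "x j (\<alpha>, u) \<noteq> 0"
    then obtain y where y: "y \<in> HB m n t p" and nz: "c y * DH m n t p (bas y) j (\<alpha>, u) \<noteq> 0"
      unfolding xc by (meson sum.neutral)
    from nz have "(DH m n t p (bas y) j (\<alpha>, u) :: 'a) \<noteq> 0" by auto
    thus "odd (card u) \<longleftrightarrow> m < j" by (rule DH_parity[OF me bas_even[OF y]])
  qed
  have P4: "\<forall>\<alpha>. (\<Sum>k\<in>{m+1..m+n}. x k (\<alpha>, {k})) = 0"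
  proof
    fix \<alpha>
    have "(\<Sum>k\<in>{m+1..m+n}. x k (\<alpha>, {k})) = (\<Sum>y\<in>HB m n t p. c y * (\<Sum>k\<in>{m+1..m+n}. DH m n t p (bas y) k (\<alpha>, {k})))"
      unfolding xc by (simp add: sum_distrib_left) (rule sum.swap)
    also have "\<dots> = 0"
    proof (rule sum.neutral, rule ballI)
      fix y assume y: "y \<in> HB m n t p"
      show "c y * (\<Sum>k\<in>{m+1..m+n}. DH m n t p (bas y) k (\<alpha>, {k})) = 0"
        using DH_div[OF bas_even[OF y] no, where 'a='a and \<alpha>=\<alpha> and m=m and t=t and p=p] by simp
    qed
    finally show "(\<Sum>k\<in>{m+1..m+n}. x k (\<alpha>, {k})) = 0" .
  qed
  show ?thesis using P1 P3 P4 by (simp add: good_def)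
qed

abbreviation ZW :: "'a::field sW" where "ZW \<equiv> (\<lambda>_ _. 0)"

lemma sum_split_range: "sum f {1..m+n} = sum f {1..m} + sum f {m+1..(m+n::nat)}"
proof -
  have "{1..m+n} = {1..m} \<union> {m+1..m+n}" by auto
  moreover have "{1..m} \<inter> {m+1..m+n} = {}" by auto
  ultimately show ?thesis by (simp add: sum.union_disjoint)
qed

lemma good_L0: "good m n t p x \<Longrightarrow> \<not> j \<in> {1..m} \<Longrightarrow> L0 (x j) = (\<lambda>_. 0)"
  unfolding good_def L0_def by (rule ext) (metis atLeastAtMost_iff card.empty even_zero le_add1 le_trans not_le_imp_less)

lemma good_odd: "good m n t p x \<Longrightarrow> k \<in> {m+1..m+n} \<Longrightarrow> \<forall>\<alpha> u. x k (\<alpha>, u) \<noteq> 0 \<longrightarrow> odd (card u)"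
  unfolding good_def by auto

lemma good_WpF: "good m n t p x \<Longrightarrow> Wpart m x False = x"
  unfolding good_def Wpart_def opart_def by (intro ext) (auto split: prod.splits)

lemma good_WpT: "good m n t p x \<Longrightarrow> Wpart m x True = ZW"
  unfolding good_def Wpart_def opart_def by (intro ext) (auto split: prod.splits)

lemma XW_WpT:
  assumes no: "odd n" and S: "\<And>j. j \<notin> {1..m} \<Longrightarrow> S j = (\<lambda>_. 0)"
  shows "Wpart m (\<lambda>j. XW m n (S j)) True = (\<lambda>j. XW m n (S j))"
proof (intro ext)
  fix j :: nat and z :: idx
  obtain \<gamma> w where z: "z = (\<gamma>, w)" by (cases z)
  show "Wpart m (\<lambda>j. XW m n (S j)) True j z = XW m n (S j) z"
  proof (cases "j \<in> {1..m}")
    case True thus ?thesis using no by (auto simp: Wpart_def opart_def XW_def z omega_def)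
  next
    case False thus ?thesis using S[OF False] by (auto simp: Wpart_def opart_def XW_def z)
  qed
qed

lemma XW_WpF:
  assumes no: "odd n" and S: "\<And>j. j \<notin> {1..m} \<Longrightarrow> S j = (\<lambda>_. 0)"
  shows "Wpart m (\<lambda>j. XW m n (S j)) False = ZW"
proof (intro ext)
  fix j :: nat and z :: idx
  obtain \<gamma> w where z: "z = (\<gamma>, w)" by (cases z)
  show "Wpart m (\<lambda>j. XW m n (S j)) False j z = 0"
  proof (cases "j \<in> {1..m}")
    case True thus ?thesis using no by (auto simp: Wpart_def opart_def XW_def z omega_def)
  next
    case False thus ?thesis using S[OF False] by (auto simp: Wpart_def opart_def XW_def z)
  qed
qed

lemma Wapp_Z1: "Wapp m n t p ZW h z = 0"
  by (simp add: Wapp_def omul_zero_left)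

lemma Wapp_Z2: "Wapp m n t p D (\<lambda>_. 0) z = 0"
  by (simp add: Wapp_def oderiv_zero omul_zero_right)

lemma Wbr_decomp:
  assumes "Wpart m D a = D" "Wpart m D (\<not> a) = ZW" "Wpart m E b = E" "Wpart m E (\<not> b) = ZW"
  shows "Wbr m n t p D E = brh m n t p a b D E"
proof -
  have z1: "brh m n t p a' b' ZW E' = ZW" for a' b' E' by (simp add: brh_def Wapp_Z1 Wapp_Z2)
  have z2: "brh m n t p a' b' D' ZW = ZW" for a' b' D' by (simp add: brh_def Wapp_Z1 Wapp_Z2)
  show ?thesis using assms
    by (cases a; cases b) (simp_all add: Wbr_def UNIV_bool z1 z2)
qed

lemma sum_if_const: "(\<Sum>k\<in>S. if c then f k else 0) = (if c then (\<Sum>k\<in>S. f k) else 0)"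
  by (cases c) simp_all

lemma Wapp_w0:
  assumes g: "good m n t p x"
  shows "Wapp m n t p x h (\<gamma>, {}) = (\<Sum>k\<in>{1..m}. dpm m t p (L0 (x k)) (dk m t p k (L0 h)) \<gamma>)"
proof -
  have "Wapp m n t p x h (\<gamma>, {}) = (\<Sum>k\<in>{1..m+n}. dpm m t p (L0 (x k)) (L0 (oderiv m n t p k h)) \<gamma>)"
    by (simp add: Wapp_def omul_w0)
  also have "\<dots> = (\<Sum>k\<in>{1..m}. dpm m t p (L0 (x k)) (L0 (oderiv m n t p k h)) \<gamma>)"
    unfolding sum_split_range using good_L0[OF g] by (simp add: dpm_zero_left)
  also have "\<dots> = (\<Sum>k\<in>{1..m}. dpm m t p (L0 (x k)) (dk m t p k (L0 h)) \<gamma>)"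
    by (rule sum.cong[OF refl]) (simp add: L0_oderiv)
  finally show ?thesis .
qed

lemma Wapp_XW1:
  assumes S: "\<And>j. j \<notin> {1..m} \<Longrightarrow> P j = (\<lambda>_. 0)"
  shows "Wapp m n t p (\<lambda>j. XW m n (P j)) h (\<gamma>, w)
     = (if \<gamma> \<in> Aset m t p \<and> w = omega m n then (\<Sum>k\<in>{1..m}. dpm m t p (P k) (dk m t p k (L0 h)) \<gamma>) else 0)"
proof -
  have "Wapp m n t p (\<lambda>j. XW m n (P j)) h (\<gamma>, w) = (\<Sum>k\<in>{1..m+n}. if \<gamma> \<in> Aset m t p \<and> w = omega m n then dpm m t p (P k) (L0 (oderiv m n t p k h)) \<gamma> else 0)"
    by (simp add: Wapp_def omul_XW_left)
  also have "\<dots> = (\<Sum>k\<in>{1..m}. if \<gamma> \<in> Aset m t p \<and> w = omega m n then dpm m t p (P k) (L0 (oderiv m n t p k h)) \<gamma> else 0)"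
  proof -
    have "(\<Sum>k\<in>{m+1..m+n}. if \<gamma> \<in> Aset m t p \<and> w = omega m n then dpm m t p (P k) (L0 (oderiv m n t p k h)) \<gamma> else 0) = 0"
    proof (rule sum.neutral, rule ballI)
      fix k assume "k \<in> {m+1..m+n}"
      hence "P k = (\<lambda>_. 0)" by (intro S) auto
      thus "(if \<gamma> \<in> Aset m t p \<and> w = omega m n then dpm m t p (P k) (L0 (oderiv m n t p k h)) \<gamma> else 0) = 0"
        by (simp add: dpm_zero_left)
    qed
    thus ?thesis unfolding sum_split_range by simp
  qed
  also have "\<dots> = (if \<gamma> \<in> Aset m t p \<and> w = omega m n then (\<Sum>k\<in>{1..m}. dpm m t p (P k) (dk m t p k (L0 h)) \<gamma>) else 0)"
    unfolding sum_if_const by (rule if_cong[OF refl _ refl], rule sum.cong[OF refl]) (simp add: L0_oderiv)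
  finally show ?thesis .
qed

lemma Wapp_XW2:
  assumes g: "good m n t p y"
  shows "Wapp m n t p y (XW m n Q) (\<gamma>, w)
     = (if \<gamma> \<in> Aset m t p \<and> w = omega m n then (\<Sum>k\<in>{1..m}. dpm m t p (L0 (y k)) (dk m t p k Q) \<gamma>) else 0)"
proof -
  have a: "(\<Sum>k\<in>{1..m}. omul m n t p (y k) (oderiv m n t p k (XW m n Q)) (\<gamma>, w))
      = (if \<gamma> \<in> Aset m t p \<and> w = omega m n then (\<Sum>k\<in>{1..m}. dpm m t p (L0 (y k)) (dk m t p k Q) \<gamma>) else 0)"
    unfolding sum_if_const[symmetric] by (rule sum.cong[OF refl]) (simp add: oderiv_XW_even omul_XW_right)
  have "(\<Sum>k\<in>{m+1..m+n}. omul m n t p (y k) (oderiv m n t p k (XW m n Q)) (\<gamma>, w))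
      = (\<Sum>k\<in>{m+1..m+n}. if \<gamma> \<in> Aset m t p \<and> w = omega m n then dpm m t p (\<lambda>\<alpha>. y k (\<alpha>, {k})) Q \<gamma> else 0)"
    by (rule sum.cong[OF refl]) (rule omul_odd[OF _ good_odd[OF g]])
  also have "\<dots> = (if \<gamma> \<in> Aset m t p \<and> w = omega m n then dpm m t p (\<lambda>\<alpha>. \<Sum>k\<in>{m+1..m+n}. y k (\<alpha>, {k})) Q \<gamma> else 0)"
    unfolding sum_if_const by (simp add: dpm_sum_left)
  also have "\<dots> = 0" using g by (simp add: good_def dpm_zero_left)
  finally have b: "(\<Sum>k\<in>{m+1..m+n}. omul m n t p (y k) (oderiv m n t p k (XW m n Q)) (\<gamma>, w)) = 0" .
  show ?thesis unfolding Wapp_def sum_split_range a b by simp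
qed

lemma shf_dk:
  assumes i: "i \<in> {1..m}" and k: "k \<in> {1..m}"
  shows "shf m t p i N (dk m t p k F) = dk m t p k (shf m t p i N F)"
proof (rule ext)
  fix \<beta>
  let ?A = "Aset m t p"
  let ?x = "\<beta>(i := \<beta> i + N)" and ?y = "\<beta>(k := \<beta> k + 1)"
  have e: "?x(k := ?x k + 1) = ?y(i := ?y i + N)" by (auto simp: fun_eq_iff)
  have lex: "\<forall>j. ?x j \<le> (?x(k := ?x k + 1)) j" and ley: "\<forall>j. ?y j \<le> (?x(k := ?x k + 1)) j"
    and lbx: "\<forall>j. \<beta> j \<le> ?x j" and lby: "\<forall>j. \<beta> j \<le> ?y j" by auto
  show "shf m t p i N (dk m t p k F) \<beta> = dk m t p k (shf m t p i N F) \<beta>"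
  proof (cases "\<beta> \<in> ?A \<and> ?x(k := ?x k + 1) \<in> ?A")
    case True
    hence "?x \<in> ?A" "?y \<in> ?A" using Aset_le lex ley by blast+
    thus ?thesis using True e by (simp add: shf_def dk_def)
  next
    case False
    have "\<not> (\<beta> \<in> ?A \<and> ?x \<in> ?A \<and> ?x(k := ?x k + 1) \<in> ?A)" using False by blast
    moreover have "\<not> (\<beta> \<in> ?A \<and> ?y \<in> ?A \<and> ?y(i := ?y i + N) \<in> ?A)" using False e by auto
    ultimately show ?thesis unfolding shf_def dk_def by auto
  qed
qed

lemma shf_zero: "shf m t p i N (\<lambda>_. 0) = (\<lambda>_. (0::'a::zero))"
  by (simp add: shf_def fun_eq_iff)

lemma main_deriv:
  fixes x y :: "'a::field sW"
  assumes ch: "CHAR('a) = p" and pr: "prime p" and i: "i \<in> {1..m}" and no: "odd n"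
    and gx: "good m n t p x" and gy: "good m n t p y"
  shows "(\<lambda>j. XW m n (shf m t p i (p ^ e) (L0 (Wbr m n t p x y j))))
    = Wadd (Wbr m n t p (\<lambda>j. XW m n (shf m t p i (p ^ e) (L0 (x j)))) y)
           (Wbr m n t p x (\<lambda>j. XW m n (shf m t p i (p ^ e) (L0 (y j)))))"
proof (intro ext)
  fix j :: nat and z :: idx
  obtain \<gamma> w where z: "z = (\<gamma>, w)" by (cases z)
  let ?sh = "shf m t p i (p ^ e)"
  let ?A = "Aset m t p"
  define Fx where "Fx = (\<lambda>k. L0 (x k))"
  define Fy where "Fy = (\<lambda>k. L0 (y k))"
  let ?Tx = "\<lambda>j. XW m n (?sh (Fx j))"
  let ?Ty = "\<lambda>j. XW m n (?sh (Fy j))"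
  have Sx: "\<And>j. j \<notin> {1..m} \<Longrightarrow> ?sh (Fx j) = (\<lambda>_. 0)" unfolding Fx_def using good_L0[OF gx] shf_zero by metis
  have Sy: "\<And>j. j \<notin> {1..m} \<Longrightarrow> ?sh (Fy j) = (\<lambda>_. 0)" unfolding Fy_def using good_L0[OF gy] shf_zero by metis
  have WB1: "Wbr m n t p x y = brh m n t p False False x y"
    by (rule Wbr_decomp) (simp_all add: good_WpF[OF gx] good_WpT[OF gx] good_WpF[OF gy] good_WpT[OF gy])
  have TxT: "Wpart m ?Tx True = ?Tx" by (rule XW_WpT[OF no]) (rule Sx)
  have TxF: "Wpart m ?Tx False = ZW" by (rule XW_WpF[OF no]) (rule Sx)
  have TyT: "Wpart m ?Ty True = ?Ty" by (rule XW_WpT[OF no]) (rule Sy)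
  have TyF: "Wpart m ?Ty False = ZW" by (rule XW_WpF[OF no]) (rule Sy)
  have WB2: "Wbr m n t p ?Tx y = brh m n t p True False ?Tx y"
    by (rule Wbr_decomp) (simp_all add: TxT TxF good_WpF[OF gy] good_WpT[OF gy])
  have WB3: "Wbr m n t p x ?Ty = brh m n t p False True x ?Ty"
    by (rule Wbr_decomp) (simp_all add: TyT TyF good_WpF[OF gx] good_WpT[OF gx])
  have R1: "Wapp m n t p ?Tx h (\<gamma>, w) = (if \<gamma> \<in> ?A \<and> w = omega m n then (\<Sum>k\<in>{1..m}. dpm m t p (?sh (Fx k)) (dk m t p k (L0 h)) \<gamma>) else 0)" for h
    by (rule Wapp_XW1[OF Sx])
  have R1y: "Wapp m n t p ?Ty h (\<gamma>, w) = (if \<gamma> \<in> ?A \<and> w = omega m n then (\<Sum>k\<in>{1..m}. dpm m t p (?sh (Fy k)) (dk m t p k (L0 h)) \<gamma>) else 0)" for h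
    by (rule Wapp_XW1[OF Sy])
  have R2: "Wapp m n t p y (?Tx j) (\<gamma>, w) = (if \<gamma> \<in> ?A \<and> w = omega m n then (\<Sum>k\<in>{1..m}. dpm m t p (Fy k) (dk m t p k (?sh (Fx j))) \<gamma>) else 0)"
    unfolding Fy_def by (rule Wapp_XW2[OF gy])
  have R2x: "Wapp m n t p x (?Ty j) (\<gamma>, w) = (if \<gamma> \<in> ?A \<and> w = omega m n then (\<Sum>k\<in>{1..m}. dpm m t p (Fx k) (dk m t p k (?sh (Fy j))) \<gamma>) else 0)"
    unfolding Fx_def by (rule Wapp_XW2[OF gx])
  have RHS: "Wadd (Wbr m n t p ?Tx y) (Wbr m n t p x ?Ty) j z
     = (if \<gamma> \<in> ?A \<and> w = omega m n then
          ((\<Sum>k\<in>{1..m}. dpm m t p (?sh (Fx k)) (dk m t p k (Fy j)) \<gamma>) - (\<Sum>k\<in>{1..m}. dpm m t p (Fy k) (dk m t p k (?sh (Fx j))) \<gamma>))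
        + ((\<Sum>k\<in>{1..m}. dpm m t p (Fx k) (dk m t p k (?sh (Fy j))) \<gamma>) - (\<Sum>k\<in>{1..m}. dpm m t p (?sh (Fy k)) (dk m t p k (Fx j)) \<gamma>))
        else 0)"
    unfolding Wadd_def WB2 WB3 brh_def z R1 R1y R2 R2x by (simp add: Fx_def Fy_def)
  show "XW m n (?sh (L0 (Wbr m n t p x y j))) z = Wadd (Wbr m n t p ?Tx y) (Wbr m n t p x ?Ty) j z"
  proof (cases "\<gamma> \<in> ?A \<and> w = omega m n")
    case False
    thus ?thesis unfolding RHS by (auto simp: z XW_def shf_def)
  next
    case True
    hence gA: "\<gamma> \<in> ?A" and w: "w = omega m n" by auto
    define g' where "g' = \<gamma>(i := \<gamma> i + p ^ e)"
    have L: "L0 (Wbr m n t p x y j) g' = (\<Sum>k\<in>{1..m}. dpm m t p (Fx k) (dk m t p k (Fy j)) g') - (\<Sum>k\<in>{1..m}. dpm m t p (Fy k) (dk m t p k (Fx j)) g')"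
      unfolding WB1 brh_def L0_def by (simp add: Wapp_w0[OF gx] Wapp_w0[OF gy] Fx_def Fy_def L0_def)
    have LHS: "XW m n (?sh (L0 (Wbr m n t p x y j))) z
       = (\<Sum>k\<in>{1..m}. dpm m t p (Fx k) (dk m t p k (Fy j)) g') - (\<Sum>k\<in>{1..m}. dpm m t p (Fy k) (dk m t p k (Fx j)) g')"
    proof (cases "g' \<in> ?A")
      case True thus ?thesis using gA w L unfolding z by (simp add: XW_def shf_def g'_def)
    next
      case False
      hence "dpm m t p F G g' = 0" for F G :: "(nat \<Rightarrow> nat) \<Rightarrow> 'a" by (simp add: dpm_def)
      thus ?thesis using gA w False unfolding z by (simp add: XW_def shf_def g'_def)
    qed
    have lb1: "dpm m t p (Fx k) (dk m t p k (Fy j)) g' = dpm m t p (?sh (Fx k)) (dk m t p k (Fy j)) \<gamma> + dpm m t p (Fx k) (dk m t p k (?sh (Fy j))) \<gamma>"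
      if k: "k \<in> {1..m}" for k
      unfolding g'_def leibniz[OF ch pr i gA] shf_dk[OF i k] ..
    have lb2: "dpm m t p (Fy k) (dk m t p k (Fx j)) g' = dpm m t p (?sh (Fy k)) (dk m t p k (Fx j)) \<gamma> + dpm m t p (Fy k) (dk m t p k (?sh (Fx j))) \<gamma>"
      if k: "k \<in> {1..m}" for k
      unfolding g'_def leibniz[OF ch pr i gA] shf_dk[OF i k] ..
    have s1: "(\<Sum>k\<in>{1..m}. dpm m t p (Fx k) (dk m t p k (Fy j)) g') = (\<Sum>k\<in>{1..m}. dpm m t p (?sh (Fx k)) (dk m t p k (Fy j)) \<gamma>) + (\<Sum>k\<in>{1..m}. dpm m t p (Fx k) (dk m t p k (?sh (Fy j))) \<gamma>)"
      unfolding sum.distrib[symmetric] by (rule sum.cong[OF refl], rule lb1)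
    have s2: "(\<Sum>k\<in>{1..m}. dpm m t p (Fy k) (dk m t p k (Fx j)) g') = (\<Sum>k\<in>{1..m}. dpm m t p (?sh (Fy k)) (dk m t p k (Fx j)) \<gamma>) + (\<Sum>k\<in>{1..m}. dpm m t p (Fy k) (dk m t p k (?sh (Fx j))) \<gamma>)"
      unfolding sum.distrib[symmetric] by (rule sum.cong[OF refl], rule lb2)
    show ?thesis unfolding LHS RHS s1 s2 using True by (simp add: algebra_simps)
  qed
qed

theorem lemma4p2:
  fixes m n p i q :: nat and t :: "nat \<Rightarrow> nat"
  assumes char: "CHAR('a::field) = p" and pprime: "prime p" and p3: "p > 3"
    and algclosed: "\<forall>P :: 'a poly. degree P \<noteq> 0 \<longrightarrow> (\<exists>z. poly P z = 0)"
    and m_pos: "m > 0" and m_even: "even m" and n_odd: "odd n"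
    and t_pos: "\<forall>k\<in>{1..m}. t k > 0"
    and i_in: "i \<in> {1..m}" and q_pos: "q > 0"
  shows "(\<forall>x\<in>(H0 m n t p :: 'a sW set). Theta m n t p i q x \<in> W1 m n t p)
    \<and> (\<forall>x\<in>(H0 m n t p :: 'a sW set). \<forall>y\<in>H0 m n t p.
          Theta m n t p i q (Wbr m n t p x y)
            = Wadd (Wbr m n t p (Theta m n t p i q x) y) (Wbr m n t p x (Theta m n t p i q y)))
    \<and> (\<forall>k. \<forall>x\<in>(H0 m n t p :: 'a sW set). Whom m k x
          \<longrightarrow> Whom m (k + int n - int (p ^ q)) (Theta m n t p i q x))"
proof -
  have pp: "p > 0" using p3 by simp
  note Th = Theta_closed[OF i_in pp, where 'a='a]
  let ?sh = "shf m t p i (p ^ q)"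
  have S0: "?sh (L0 (x j)) = (\<lambda>_. 0)" if "x \<in> (H0 m n t p :: 'a sW set)" "j \<notin> {1..m}" for x j
    using good_L0[OF H0_good[OF m_even n_odd that(1)] that(2)] shf_zero by metis
  have part1: "Theta m n t p i q x \<in> W1 m n t p" if x: "x \<in> (H0 m n t p :: 'a sW set)" for x
  proof -
    have g: "good m n t p x" by (rule H0_good[OF m_even n_odd x])
    have a: "\<forall>j. j \<notin> {1..m+n} \<longrightarrow> Theta m n t p i q x j = (\<lambda>_. 0)"
      using g by (auto simp: Th good_def L0_def shf_zero[unfolded fun_eq_iff] XW_def fun_eq_iff shf_def)
    have b: "\<forall>j z. z \<notin> Bas m n t p \<longrightarrow> Theta m n t p i q x j z = 0"
      by (auto simp: Th XW_def shf_def Bas_iff omega_def)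
    have c: "Wpart m (Theta m n t p i q x) True = Theta m n t p i q x"
      unfolding Th by (rule XW_WpT[OF n_odd]) (rule S0[OF x])
    show ?thesis using a b c by (simp add: W1_def Wset_def)
  qed
  have part2: "Theta m n t p i q (Wbr m n t p x y) = Wadd (Wbr m n t p (Theta m n t p i q x) y) (Wbr m n t p x (Theta m n t p i q y))"
    if x: "x \<in> (H0 m n t p :: 'a sW set)" and y: "y \<in> H0 m n t p" for x y
    unfolding Th by (rule main_deriv[OF char pprime i_in n_odd H0_good[OF m_even n_odd x] H0_good[OF m_even n_odd y]])
  have part3: "Whom m (k + int n - int (p ^ q)) (Theta m n t p i q x)"
    if x: "x \<in> (H0 m n t p :: 'a sW set)" and h: "Whom m k x" for k x
  proof -
    show ?thesis unfolding Whom_def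
    proof (intro allI impI)
      fix j z assume nz: "Theta m n t p i q x j z \<noteq> 0"
      obtain \<gamma> w where z: "z = (\<gamma>, w)" by (cases z)
      let ?g' = "\<gamma>(i := \<gamma> i + p ^ q)"
      have w: "w = omega m n" and nz2: "x j (?g', {}) \<noteq> 0"
        using nz by (auto simp: Th z XW_def shf_def L0_def split: if_splits)
      have hk: "int (zdeg m (?g', {})) - 1 = k" using h nz2 unfolding Whom_def by blast
      have s: "(\<Sum>k\<in>{1..m}. ?g' k) = (\<Sum>k\<in>{1..m}. \<gamma> k) + p ^ q"
      proof -
        have "(\<Sum>k\<in>{1..m}. ?g' k) = (\<Sum>k\<in>{1..m}. \<gamma> k + (if k = i then p ^ q else 0))"
          by (rule sum.cong) auto
        also have "\<dots> = (\<Sum>k\<in>{1..m}. \<gamma> k) + p ^ q" using i_in by (simp add: sum.distrib)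
        finally show ?thesis .
      qed
      have zd1: "zdeg m (?g', {}) = (\<Sum>k\<in>{1..m}. \<gamma> k) + p ^ q" unfolding zdeg_def fst_conv snd_conv s by simp
      have zd2: "zdeg m z = (\<Sum>k\<in>{1..m}. \<gamma> k) + n" by (simp add: zdeg_def z w omega_def)
      show "int (zdeg m z) - 1 = k + int n - int (p ^ q)" using hk zd1 zd2 by simp
    qed
  qed
  show ?thesis using part1 part2 part3 by blast
qed

end
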